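(* Let $s,t,p\ge 1$, $A,B\in GL(n)$ and $Q\in\mathcal{P}(n)$ with $k=\lambda_1(Q)>1$. Put $\tilde k=\lambda_n(Q)$, $q=\min\{t/s,p/s\}$ and $\tilde q=\max\{t/s,p/s\}$. If $$\|A\|^2+\|B\|^2<\frac{q^{\tilde q}\,\tilde k^{\tilde q+1}}{k^{\tilde q}(q+1)^{\tilde q+1}},$$ then the equation $X^s+A^*X^{-t}A+B^*X^{-p}B=Q$ has a Hermitian positive definite solution in $\big[\big(\tfrac{q\tilde k}{k(q+1)}\big)^{1/s}I,\;Q^{1/s}\big]$.
   Context: $GL(n)$: $n\times n$ complex nonsingular matrices; $\mathcal{P}(n)$: $n\times n$ Hermitian positive definite matrices. For Hermitian $M$, $\lambda_1(M)$ and $\lambda_n(M)$ are its largest and smallest eigenvalues. $\|\cdot\|$ is the spectral norm. For Hermitian $P,R$, $P\le R$ means $R-P$ is positive semidefinite, and $[P,R]=\{X \text{ Hermitian}: P\le X\le R\}$. Real powers of positive definite matrices are defined by functional calculus. *)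

theory Defs
  imports "HOL-Analysis.Analysis"
begin

definition adj :: "complex^'n^'m \<Rightarrow> complex^'m^'n" where
  "adj A = (\<chi> i j. cnj (A $ j $ i))"

definition hermitian :: "complex^'n^'n \<Rightarrow> bool" where
  "hermitian M \<longleftrightarrow> adj M = M"

definition qform :: "complex^'n^'n \<Rightarrow> complex^'n \<Rightarrow> complex" where
  "qform M x = (\<Sum>i\<in>UNIV. cnj (x $ i) * (M *v x) $ i)"

definition pos_def :: "complex^'n^'n \<Rightarrow> bool" where
  "pos_def M \<longleftrightarrow> hermitian M \<and> (\<forall>x. x \<noteq> 0 \<longrightarrow> Re (qform M x) > 0)"

definition pos_semidef :: "complex^'n^'n \<Rightarrow> bool" where
  "pos_semidef M \<longleftrightarrow> hermitian M \<and> (\<forall>x. Re (qform M x) \<ge> 0)"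

definition loewner_le :: "complex^'n^'n \<Rightarrow> complex^'n^'n \<Rightarrow> bool" where
  "loewner_le P R \<longleftrightarrow> pos_semidef (R - P)"

definition eigenvalues :: "complex^'n^'n \<Rightarrow> real set" where
  "eigenvalues M = {c. \<exists>x. x \<noteq> 0 \<and> M *v x = complex_of_real c *s x}"

definition lambda_max :: "complex^'n^'n \<Rightarrow> real" where
  "lambda_max M = Max (eigenvalues M)"

definition lambda_min :: "complex^'n^'n \<Rightarrow> real" where
  "lambda_min M = Min (eigenvalues M)"

definition spec_norm :: "complex^'n^'m \<Rightarrow> real" where
  "spec_norm A = onorm (\<lambda>x. A *v x)"

definition unitary :: "complex^'n^'n \<Rightarrow> bool" where
  "unitary U \<longleftrightarrow> U ** adj U = mat 1 \<and> adj U ** U = mat 1"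

definition diag_mat :: "('n \<Rightarrow> real) \<Rightarrow> complex^'n^'n" where
  "diag_mat d = (\<chi> i j. if i = j then complex_of_real (d i) else 0)"

definition mpow :: "complex^'n^'n \<Rightarrow> real \<Rightarrow> complex^'n^'n" where
  "mpow M r = (SOME N. \<exists>U d. unitary U \<and> (\<forall>i. d i > 0) \<and>
      M = U ** diag_mat d ** adj U \<and> N = U ** diag_mat (\<lambda>i. d i powr r) ** adj U)"

end

theory Submission
  imports Defs "HOL-Analysis.Analysis"
begin

definition cinner :: "complex^'n \<Rightarrow> complex^'n \<Rightarrow> complex" where
  "cinner x y = (\<Sum>i\<in>UNIV. cnj (x $ i) * y $ i)"

lemma qform_cinner: "qform M x = cinner x (M *v x)"
  by (simp add: qform_def cinner_def)

lemma adj_adj[simp]: "adj (adj A) = A"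
  by (simp add: adj_def vec_eq_iff)

lemma adj_mult: "adj (A ** B) = adj B ** adj A"
  by (simp add: adj_def vec_eq_iff matrix_matrix_mult_def mult.commute)

lemma adj_add: "adj (A + B) = adj A + adj B"
  by (simp add: adj_def vec_eq_iff)

lemma adj_diff: "adj (A - B) = adj A - adj B"
  by (simp add: adj_def vec_eq_iff)

lemma cscaleR: "c *\<^sub>R (z::complex) = of_real c * z"
  by (simp add: scaleR_conv_of_real)
lemma scaleR_mat_comp: "(c *\<^sub>R (A::complex^'n^'m)) $ i $ j = of_real c * A $ i $ j"
  unfolding vector_scaleR_component by (rule cscaleR)
lemma scaleR_vec_comp: "(c *\<^sub>R (x::complex^'n)) $ i = of_real c * x $ i"
  unfolding vector_scaleR_component by (rule cscaleR)

lemma cnj_mult_self: "cnj z * z = complex_of_real ((norm z)\<^sup>2)"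
  by (metis complex_norm_square mult.commute)
lemma cnj_mult_self2: "cnj z * z = (complex_of_real (norm z))\<^sup>2"
  by (simp add: cnj_mult_self)
lemma mult_cnj2: "z * cnj z = (complex_of_real (norm z))\<^sup>2"
  by (metis cnj_mult_self2 mult.commute)

lemma adj_scaleR: "adj (c *\<^sub>R A) = c *\<^sub>R adj A"
  by (simp add: adj_def vec_eq_iff scaleR_mat_comp)

lemma adj_mat1[simp]: "adj (mat 1) = mat 1"
  by (simp add: adj_def vec_eq_iff mat_def)

lemma adj_diag[simp]: "adj (diag_mat d) = diag_mat d"
  by (simp add: adj_def vec_eq_iff diag_mat_def)

lemma cinner_adj: "cinner x (A *v y) = cinner (adj A *v x) y"
proof -
  have "cinner x (A *v y) = (\<Sum>i\<in>UNIV. \<Sum>j\<in>UNIV. cnj (x$i) * (A$i$j * y$j))"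
    by (simp add: cinner_def matrix_vector_mult_def sum_distrib_left)
  also have "\<dots> = (\<Sum>j\<in>UNIV. \<Sum>i\<in>UNIV. cnj (x$i) * (A$i$j * y$j))" by (rule sum.swap)
  also have "\<dots> = cinner (adj A *v x) y"
    by (simp add: cinner_def matrix_vector_mult_def adj_def sum_distrib_right sum_distrib_left mult_ac)
  finally show ?thesis .
qed

lemma cinner_commute: "cinner y x = cnj (cinner x y)"
  by (simp add: cinner_def mult.commute)

lemma cinner_add_right: "cinner x (y + z) = cinner x y + cinner x z"
  by (simp add: cinner_def algebra_simps sum.distrib)
lemma cinner_diff_right: "cinner x (y - z) = cinner x y - cinner x z"
  by (simp add: cinner_def algebra_simps sum_subtractf)
lemma cinner_add_left: "cinner (y + z) x = cinner y x + cinner z x"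
  by (simp add: cinner_def algebra_simps sum.distrib)
lemma cinner_diff_left: "cinner (y - z) x = cinner y x - cinner z x"
  by (simp add: cinner_def algebra_simps sum_subtractf)
lemma cinner_scale_right: "cinner x (c *s y) = c * cinner x y"
  by (simp add: cinner_def algebra_simps sum_distrib_left)
lemma cinner_scale_left: "cinner (c *s y) x = cnj c * cinner y x"
  by (simp add: cinner_def algebra_simps sum_distrib_left)
lemma cinner_scaleR_right: "cinner x (c *\<^sub>R y) = of_real c * cinner x y"
  unfolding cinner_def scaleR_vec_comp by (simp add: sum_distrib_left mult_ac)
lemma cinner_scaleR_left: "cinner (c *\<^sub>R y) x = of_real c * cinner y x"
  unfolding cinner_def scaleR_vec_comp by (simp add: sum_distrib_left mult_ac)
lemma cinner_zero_left[simp]: "cinner 0 x = 0" by (simp add: cinner_def)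
lemma cinner_zero_right[simp]: "cinner x 0 = 0" by (simp add: cinner_def)

lemma norm_sq_vec: "(norm (x::complex^'n))\<^sup>2 = (\<Sum>i\<in>UNIV. (norm (x $ i))\<^sup>2)"
  by (simp add: norm_vec_def L2_set_def sum_nonneg)

lemma cinner_self: "cinner x x = of_real ((norm x)\<^sup>2)"
proof -
  have "cinner x x = (\<Sum>i\<in>UNIV. of_real ((norm (x $ i))\<^sup>2))"
    unfolding cinner_def by (intro sum.cong refl) (rule cnj_mult_self)
  also have "\<dots> = of_real ((norm x)\<^sup>2)" by (simp add: norm_sq_vec)
  finally show ?thesis .
qed

lemma Re_cinner_self: "Re (cinner x x) = (norm x)\<^sup>2"
  by (simp add: cinner_self)

lemma cinner_self_eq_0: "cinner x x = 0 \<longleftrightarrow> x = 0"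
  by (simp add: cinner_self)

lemma qform_add: "qform (M + N) x = qform M x + qform N x"
  by (simp add: qform_cinner matrix_vector_mult_add_rdistrib cinner_add_right)
lemma qform_diff: "qform (M - N) x = qform M x - qform N x"
  by (simp add: qform_cinner matrix_vector_mult_diff_rdistrib cinner_diff_right)
lemma qform_scaleR: "qform (c *\<^sub>R M) x = of_real c * qform M x"
proof -
  have "(c *\<^sub>R M) *v x = c *\<^sub>R (M *v x)"
    by (simp add: vec_eq_iff matrix_vector_mult_def scaleR_mat_comp scaleR_vec_comp sum_distrib_left mult_ac scaleR_sum_right)
  thus ?thesis by (simp add: qform_cinner cinner_scaleR_right)
qed
lemma qform_mat1: "qform (mat 1) x = of_real ((norm x)\<^sup>2)"
  by (simp add: qform_cinner cinner_self)

lemma diag_mult_vec: "diag_mat d *v x = (\<chi> i. of_real (d i) * x $ i)"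
  by (simp add: diag_mat_def matrix_vector_mult_def vec_eq_iff if_distrib if_distribR cong: if_cong)

lemma mult_diag_right: "(W ** diag_mat d) $ i $ j = W $ i $ j * of_real (d j)"
proof -
  have "(W ** diag_mat d) $ i $ j = (\<Sum>k\<in>UNIV. W $ i $ k * (if k = j then of_real (d k) else 0))"
    unfolding matrix_matrix_mult_def diag_mat_def by simp
  also have "\<dots> = (\<Sum>k\<in>UNIV. if k = j then W $ i $ j * of_real (d j) else 0)"
    by (rule sum.cong) auto
  finally show ?thesis by simp
qed
lemma mult_diag_left: "(diag_mat d ** W) $ i $ j = of_real (d i) * W $ i $ j"
proof -
  have "(diag_mat d ** W) $ i $ j = (\<Sum>k\<in>UNIV. (if i = k then of_real (d i) else 0) * W $ k $ j)"
    unfolding matrix_matrix_mult_def diag_mat_def by simp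
  also have "\<dots> = (\<Sum>k\<in>UNIV. if k = i then of_real (d i) * W $ i $ j else 0)"
    by (rule sum.cong) auto
  finally show ?thesis by simp
qed

lemma diag_mult_diag: "diag_mat d ** diag_mat e = diag_mat (\<lambda>i. d i * e i)"
  unfolding vec_eq_iff mult_diag_left by (simp add: diag_mat_def)

lemma diag_one: "diag_mat (\<lambda>i. 1) = mat 1"
  unfolding diag_mat_def mat_def by (simp add: vec_eq_iff)

lemma diag_add: "diag_mat (\<lambda>i. d i + e i) = diag_mat d + diag_mat e"
  by (simp add: diag_mat_def vec_eq_iff)
lemma diag_diff: "diag_mat (\<lambda>i. d i - e i) = diag_mat d - diag_mat e"
  by (simp add: diag_mat_def vec_eq_iff)
lemma diag_scaleR: "diag_mat (\<lambda>i. c * d i) = c *\<^sub>R diag_mat d"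
  by (simp add: diag_mat_def vec_eq_iff scaleR_mat_comp cscaleR)
lemma diag_const: "diag_mat (\<lambda>i. c) = c *\<^sub>R mat 1"
  by (simp add: diag_mat_def vec_eq_iff mat_def scaleR_mat_comp cscaleR)

lemma cinner_diag: "cinner w (diag_mat d *v w) = of_real (\<Sum>k\<in>UNIV. d k * (norm (w $ k))\<^sup>2)"
  unfolding cinner_def diag_mult_vec of_real_sum
  by (intro sum.cong refl) (simp add: mult_cnj2 mult_ac)

lemma unitary_norm: "unitary U \<Longrightarrow> norm (adj U *v x) = norm x"
proof -
  assume u: "unitary U"
  have "cinner (adj U *v x) (adj U *v x) = cinner x (U *v (adj U *v x))"
    by (simp add: cinner_adj)
  also have "\<dots> = cinner x x" using u by (simp add: unitary_def matrix_vector_mul_assoc)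
  finally have "complex_of_real ((norm (adj U *v x))\<^sup>2) = complex_of_real ((norm x)\<^sup>2)"
    by (simp only: cinner_self)
  hence "(norm (adj U *v x))\<^sup>2 = (norm x)\<^sup>2" by (simp only: of_real_eq_iff)
  thus ?thesis by (simp add: power2_eq_iff_nonneg)
qed

lemma qform_decomp:
  assumes "unitary U"
  shows "qform (U ** diag_mat d ** adj U) x = of_real (\<Sum>k\<in>UNIV. d k * (norm ((adj U *v x) $ k))\<^sup>2)"
proof -
  have "qform (U ** diag_mat d ** adj U) x = cinner x (U *v (diag_mat d *v (adj U *v x)))"
    by (simp add: qform_cinner matrix_vector_mul_assoc matrix_mul_assoc)
  also have "\<dots> = cinner (adj U *v x) (diag_mat d *v (adj U *v x))"
    by (simp add: cinner_adj)
  finally show ?thesis by (simp add: cinner_diag)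
qed

lemma sum_norm_adj: "unitary U \<Longrightarrow> (\<Sum>k\<in>UNIV. (norm ((adj U *v x) $ k))\<^sup>2) = (norm x)\<^sup>2"
  by (simp add: norm_sq_vec[symmetric] unitary_norm)

lemma hermitian_decomp: "hermitian (U ** diag_mat d ** adj U)"
  by (simp add: hermitian_def adj_mult matrix_mul_assoc)

lemma unitary_adj: "unitary U \<Longrightarrow> unitary (adj U)"
  by (simp add: unitary_def)



lemma mv_scaleR: "(A::complex^'n^'m) *v (c *\<^sub>R x) = c *\<^sub>R (A *v x)"
  using linear_iff matrix_vector_mul_linear by blast

lemma hermitian_cinner: "hermitian H \<Longrightarrow> cinner x (H *v y) = cinner (H *v x) y"
  by (metis cinner_adj hermitian_def)

lemma scaleR_as_smult: "c *\<^sub>R (u::complex^'n) = of_real c *s u"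
  unfolding vec_eq_iff scaleR_vec_comp by simp

lemma mat1_scaleR_mult: "(c *\<^sub>R mat 1) *v (u::complex^'n) = c *\<^sub>R u"
  by (simp add: vec_eq_iff matrix_vector_mult_def scaleR_mat_comp scaleR_vec_comp mat_def
      if_distrib if_distribR cong: if_cong)

lemma qform_scale_vec: "qform M (c *\<^sub>R y) = of_real (c\<^sup>2) * qform M y"
proof -
  have "M *v (c *\<^sub>R y) = c *\<^sub>R (M *v y)" by (rule mv_scaleR)
  thus ?thesis by (simp add: qform_cinner cinner_scaleR_left cinner_scaleR_right power2_eq_square)
qed

lemma no_left_inverse_zero_row:
  fixes M :: "complex^'n^'n"
  assumes "\<forall>k. M $ i $ k = 0"
  shows "\<not> (\<exists>B. B ** M = mat 1)"
proof
  assume "\<exists>B. B ** M = mat 1"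
  then obtain B where "B ** M = mat 1" by blast
  hence "M ** B = mat 1" using matrix_left_right_inverse by blast
  hence "(M ** B) $ i $ i = 1" by (simp add: mat_def)
  moreover have "(M ** B) $ i $ i = 0" using assms by (simp add: matrix_matrix_mult_def)
  ultimately show False by simp
qed

lemma exists_orth:
  fixes v :: "'n \<Rightarrow> complex^'n"
  assumes "i \<notin> S"
  shows "\<exists>x. x \<noteq> 0 \<and> (\<forall>j\<in>S. cinner (v j) x = 0)"
proof -
  define M :: "complex^'n^'n" where "M = (\<chi> a. if a \<in> S then (\<chi> b. cnj (v a $ b)) else 0)"
  have "\<forall>k. M $ i $ k = 0" using assms by (simp add: M_def)
  hence "\<not> (\<exists>B. B ** M = mat 1)" by (rule no_left_inverse_zero_row)
  hence "\<exists>x. M *v x = 0 \<and> x \<noteq> 0" using matrix_left_invertible_ker[of M] by auto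
  then obtain x where x: "M *v x = 0" "x \<noteq> 0" by blast
  have "\<forall>j\<in>S. cinner (v j) x = 0"
  proof
    fix j assume "j \<in> S"
    have "(M *v x) $ j = 0" using x by simp
    thus "cinner (v j) x = 0" using \<open>j \<in> S\<close>
      by (simp add: M_def matrix_vector_mult_def cinner_def)
  qed
  thus ?thesis using x by blast
qed

lemma continuous_cinner_right: "continuous_on UNIV (\<lambda>y. cinner a y)"
  unfolding cinner_def by (intro continuous_intros)

lemma continuous_Re_qform: "continuous_on UNIV (\<lambda>x::complex^'n. Re (qform H x))"
  unfolding qform_def matrix_vector_mult_def by (intro continuous_intros)

lemma spectral_step:
  fixes H :: "complex^'n^'n" and v :: "'n \<Rightarrow> complex^'n"
  assumes herm: "hermitian H" and iS: "i \<notin> S"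
    and eig: "\<forall>j\<in>S. \<exists>m::real. H *v v j = of_real m *s v j"
  shows "\<exists>u m. norm u = 1 \<and> (\<forall>j\<in>S. cinner (v j) u = 0) \<and> H *v u = of_real m *s u"
proof -
  define W where "W = {y. \<forall>j\<in>S. cinner (v j) y = 0}"
  have Wdiff: "y - z \<in> W" if "y \<in> W" "z \<in> W" for y z
    using that by (simp add: W_def cinner_diff_right)
  have Wscale: "c *\<^sub>R y \<in> W" if "y \<in> W" for y c
    using that by (simp add: W_def cinner_scaleR_right)
  have Wadd: "y + z \<in> W" if "y \<in> W" "z \<in> W" for y z
    using that by (simp add: W_def cinner_add_right)
  obtain x where x: "x \<noteq> 0" "x \<in> W" using exists_orth[OF iS, of v] W_def by blast
  define T where "T = sphere (0::complex^'n) 1 \<inter> W"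
  have "closed W"
  proof -
    have "W = (\<Inter>j\<in>S. {y. cinner (v j) y = 0})" by (auto simp: W_def)
    moreover have "closed {y. cinner (v j) y = 0}" for j
      using continuous_closed_preimage_constant[OF continuous_cinner_right[of "v j"] closed_UNIV]
      by (simp add: vimage_def Collect_conj_eq[symmetric])
    ultimately show ?thesis by auto
  qed
  hence "compact T" unfolding T_def by (intro compact_Int_closed compact_sphere)
  have xT: "(1 / norm x) *\<^sub>R x \<in> T" using x Wscale by (simp add: T_def)
  hence "T \<noteq> {}" by blast
  obtain u where uT: "u \<in> T" and umax: "\<forall>y\<in>T. Re (qform H y) \<le> Re (qform H u)"
    using continuous_attains_sup[OF \<open>compact T\<close> \<open>T \<noteq> {}\<close>
        continuous_on_subset[OF continuous_Re_qform[of H] subset_UNIV]] by blast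
  define m where "m = Re (qform H u)"
  have u1: "norm u = 1" and uW: "u \<in> W" using uT by (auto simp: T_def)
  have bound: "Re (qform H y) \<le> m * (norm y)\<^sup>2" if "y \<in> W" for y
  proof (cases "y = 0")
    case True thus ?thesis by (simp add: qform_def matrix_vector_mult_def)
  next
    case False
    have "(1 / norm y) *\<^sub>R y \<in> T" using False that Wscale by (simp add: T_def)
    hence "Re (qform H ((1 / norm y) *\<^sub>R y)) \<le> m" using umax m_def by blast
    hence "(1 / norm y)\<^sup>2 * Re (qform H y) \<le> m" by (simp add: qform_scale_vec)
    thus ?thesis using False by (simp add: field_simps power2_eq_square)
  qed
  define R where "R = H - m *\<^sub>R mat 1"
  have hermR: "hermitian R" using herm by (simp add: R_def hermitian_def adj_diff adj_scaleR)
  have Rv: "R *v y = H *v y - m *\<^sub>R y" for y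
    by (simp add: R_def matrix_vector_mult_diff_rdistrib mat1_scaleR_mult)
  have qR: "Re (qform R y) = Re (qform H y) - m * (norm y)\<^sup>2" for y
    by (simp add: R_def qform_diff qform_scaleR qform_mat1)
  have HW: "H *v y \<in> W" if "y \<in> W" for y
  proof -
    have "cinner (v j) (H *v y) = 0" if "j \<in> S" for j
    proof -
      obtain mj where "H *v v j = of_real mj *s v j" using eig \<open>j \<in> S\<close> by blast
      hence "cinner (v j) (H *v y) = of_real mj * cinner (v j) y"
        by (simp add: hermitian_cinner[OF herm] cinner_scale_left)
      thus ?thesis using \<open>y \<in> W\<close> \<open>j \<in> S\<close> by (simp add: W_def)
    qed
    thus ?thesis by (simp add: W_def)
  qed
  define z where "z = R *v u"
  have zW: "z \<in> W" unfolding z_def Rv using HW[OF uW] Wscale[OF uW] Wdiff by blast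
  have neg: "Re (qform R y) \<le> 0" if "y \<in> W" for y using bound[OF that] qR[of y] by simp
  have qRu: "Re (qform R u) = 0" using qR[of u] u1 m_def by simp
  have expand: "Re (qform R (u + e *\<^sub>R z)) = 2 * e * (norm z)\<^sup>2 + e\<^sup>2 * Re (qform R z)" for e
  proof -
    have "R *v (u + e *\<^sub>R z) = R *v u + e *\<^sub>R (R *v z)"
      by (simp add: matrix_vector_right_distrib mv_scaleR)
    hence "qform R (u + e *\<^sub>R z) = qform R u + of_real e * cinner u (R *v z)
         + of_real e * cinner z (R *v u) + of_real e * of_real e * qform R z"
      by (simp add: qform_cinner cinner_add_left cinner_add_right cinner_scaleR_left
          cinner_scaleR_right algebra_simps)
    moreover have "cinner u (R *v z) = cinner z z"
      using hermitian_cinner[OF hermR] z_def by simp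
    moreover have "cinner z (R *v u) = cinner z z" using z_def by simp
    ultimately show ?thesis using qRu by (simp add: cinner_self power2_eq_square)
  qed
  have le: "2 * e * (norm z)\<^sup>2 + e\<^sup>2 * Re (qform R z) \<le> 0" for e
    using neg[of "u + e *\<^sub>R z"] Wadd[OF uW Wscale[OF zW]] expand[of e] by simp
  have "z = 0"
  proof (rule ccontr)
    assume "z \<noteq> 0"
    hence np: "(norm z)\<^sup>2 > 0" by simp
    define b where "b = Re (qform R z)"
    show False
    proof (cases "b \<ge> 0")
      case True
      have "2 * 1 * (norm z)\<^sup>2 + 1\<^sup>2 * b \<le> 0" using le[of 1] b_def by simp
      thus False using np True by simp
    next
      case False
      define e where "e = (norm z)\<^sup>2 / (- b)"
      have "2 * e * (norm z)\<^sup>2 + e\<^sup>2 * b \<le> 0" using le[of e] b_def by simp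
      moreover have "2 * e * (norm z)\<^sup>2 + e\<^sup>2 * b = ((norm z)\<^sup>2)\<^sup>2 / (- b)"
        using False by (simp add: e_def field_simps power2_eq_square)
      moreover have "((norm z)\<^sup>2)\<^sup>2 / (- b) > 0"
        apply (rule divide_pos_pos) using np False by auto
      ultimately show False by linarith
    qed
  qed
  hence "H *v u = m *\<^sub>R u" using Rv[of u] z_def by simp
  hence "H *v u = of_real m *s u" by (simp add: scaleR_as_smult)
  thus ?thesis using u1 uW W_def by blast
qed

lemma spectral_induct:
  fixes H :: "complex^'n^'n" and S :: "'n set"
  assumes herm: "hermitian H" and fin: "finite S"
  shows "\<exists>v m. (\<forall>i\<in>S. \<forall>j\<in>S. cinner (v i) (v j) = (if i = j then 1 else 0))
              \<and> (\<forall>i\<in>S. H *v v i = of_real (m i) *s v i)"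
  using fin
proof (induction S rule: finite_induct)
  case empty thus ?case by simp
next
  case (insert i S)
  then obtain v m where vo: "\<forall>a\<in>S. \<forall>b\<in>S. cinner (v a) (v b) = (if a = b then 1 else 0)"
    and ve: "\<forall>a\<in>S. H *v v a = of_real (m a) *s v a" by blast
  obtain u mu where u: "norm u = 1" "\<forall>j\<in>S. cinner (v j) u = 0" "H *v u = of_real mu *s u"
    using spectral_step[OF herm insert(2), of v] ve by blast
  have uu: "cinner u u = 1" using u(1) by (simp add: cinner_self)
  have uv: "\<forall>j\<in>S. cinner u (v j) = 0" using u(2) by (metis cinner_commute complex_cnj_zero)
  show ?case
    apply (rule exI[of _ "v(i := u)"], rule exI[of _ "m(i := mu)"])
    using vo ve u uu uv insert(2) by auto
qed

definition col :: "complex^'n^'n \<Rightarrow> 'n \<Rightarrow> complex^'n" where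
  "col U k = (\<chi> a. U $ a $ k)"

theorem spectral:
  fixes H :: "complex^'n^'n"
  assumes herm: "hermitian H"
  shows "\<exists>U d. unitary U \<and> H = U ** diag_mat d ** adj U"
proof -
  obtain v :: "'n \<Rightarrow> complex^'n" and m :: "'n \<Rightarrow> real" where vo: "\<forall>a. \<forall>b. cinner (v a) (v b) = (if a = b then 1 else 0)"
    and ve: "\<forall>a. H *v v a = of_real (m a) *s v a"
    using spectral_induct[OF herm, of UNIV] by auto
  define U :: "complex^'n^'n" where "U = (\<chi> a b. v b $ a)"
  have "adj U ** U = mat 1"
  proof -
    have "(adj U ** U) $ a $ b = cinner (v a) (v b)" for a b
      by (simp add: U_def adj_def matrix_matrix_mult_def cinner_def)
    thus ?thesis using vo by (simp add: vec_eq_iff mat_def)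
  qed
  hence uni: "unitary U" using matrix_left_right_inverse unitary_def by blast
  have HU: "H ** U = U ** diag_mat m"
  proof -
    have "(H ** U) $ a $ b = (H *v v b) $ a" for a b
      by (simp add: U_def matrix_matrix_mult_def matrix_vector_mult_def)
    moreover have "(U ** diag_mat m) $ a $ b = of_real (m b) * v b $ a" for a b
      by (simp add: U_def matrix_matrix_mult_def diag_mat_def if_distrib if_distribR cong: if_cong)
    ultimately show ?thesis using ve by (simp add: vec_eq_iff)
  qed
  have "H = H ** (U ** adj U)" using uni by (simp add: unitary_def)
  also have "\<dots> = U ** diag_mat m ** adj U" by (simp add: matrix_mul_assoc HU)
  finally show ?thesis using uni by blast
qed



lemma mm_add_r: "((B::complex^'n^'m) + C) ** A = B ** A + C ** A"
  by (simp add: matrix_matrix_mult_def vec_eq_iff distrib_right sum.distrib)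
lemma mm_diff_r: "((B::complex^'n^'m) - C) ** A = B ** A - C ** A"
  by (simp add: matrix_matrix_mult_def vec_eq_iff left_diff_distrib sum_subtractf)
lemma mm_diff_l: "(A::complex^'n^'m) ** (B - C) = A ** B - A ** C"
  by (simp add: matrix_matrix_mult_def vec_eq_iff right_diff_distrib sum_subtractf)

lemma unitary_cancel:
  assumes "unitary U"
  shows "adj U ** (U ** X) = X" "U ** (adj U ** X) = X" "adj U ** U = mat 1" "U ** adj U = mat 1"
  using assms by (simp_all add: unitary_def matrix_mul_assoc)

lemma decomp_unique:
  assumes U: "unitary U" and V: "unitary V"
    and eq: "U ** diag_mat d ** adj U = V ** diag_mat e ** adj V"
  shows "U ** diag_mat (\<lambda>i. f (d i)) ** adj U = V ** diag_mat (\<lambda>i. f (e i)) ** adj V"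
proof -
  define W where "W = adj V ** U"
  have "adj V ** ((U ** diag_mat d ** adj U) ** U) = adj V ** ((V ** diag_mat e ** adj V) ** U)"
    by (simp add: eq)
  hence WD: "W ** diag_mat d = diag_mat e ** W"
    using U V by (simp add: W_def matrix_mul_assoc[symmetric] unitary_cancel)
  have WF: "W ** diag_mat (\<lambda>i. f (d i)) = diag_mat (\<lambda>i. f (e i)) ** W"
  proof -
    have "W $ i $ j * of_real (f (d j)) = of_real (f (e i)) * W $ i $ j" for i j
    proof -
      have "W $ i $ j * of_real (d j) = of_real (e i) * W $ i $ j"
        using WD by (metis mult_diag_right mult_diag_left)
      hence "W $ i $ j = 0 \<or> d j = e i" by (simp add: mult.commute)
      thus ?thesis by auto
    qed
    thus ?thesis by (simp add: vec_eq_iff mult_diag_right mult_diag_left)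
  qed
  have WU: "W ** adj U = adj V" using U by (simp add: W_def matrix_mul_assoc[symmetric] unitary_cancel)
  have "V ** (diag_mat (\<lambda>i. f (e i)) ** adj V) = V ** (diag_mat (\<lambda>i. f (e i)) ** (W ** adj U))"
    by (simp add: WU)
  also have "\<dots> = V ** ((W ** diag_mat (\<lambda>i. f (d i))) ** adj U)" by (simp add: WF matrix_mul_assoc)
  also have "\<dots> = U ** (diag_mat (\<lambda>i. f (d i)) ** adj U)"
    using V by (simp add: W_def matrix_mul_assoc[symmetric] unitary_cancel)
  finally show ?thesis by (simp add: matrix_mul_assoc)
qed

definition mfun :: "(real \<Rightarrow> real) \<Rightarrow> complex^'n^'n \<Rightarrow> complex^'n^'n" where
  "mfun f M = (SOME N. \<exists>U d. unitary U \<and> (\<forall>i. d i > 0) \<and>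
      M = U ** diag_mat d ** adj U \<and> N = U ** diag_mat (\<lambda>i. f (d i)) ** adj U)"

lemma mpow_mfun: "mpow M r = mfun (\<lambda>x. x powr r) M"
  by (simp add: mpow_def mfun_def)

lemma mfun_decomp:
  assumes U: "unitary U" and d: "\<forall>i. d i > 0"
  shows "mfun f (U ** diag_mat d ** adj U) = U ** diag_mat (\<lambda>i. f (d i)) ** adj U"
proof -
  let ?M = "U ** diag_mat d ** adj U"
  have "\<exists>N. \<exists>V e. unitary V \<and> (\<forall>i. e i > 0) \<and> ?M = V ** diag_mat e ** adj V \<and>
         N = V ** diag_mat (\<lambda>i. f (e i)) ** adj V" using U d by blast
  from someI_ex[OF this] obtain V e where V: "unitary V" "?M = V ** diag_mat e ** adj V"
    "mfun f ?M = V ** diag_mat (\<lambda>i. f (e i)) ** adj V"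
    unfolding mfun_def by blast
  thus ?thesis using decomp_unique[OF U V(1) V(2), of f] by simp
qed

lemma mv_axis: "(U::complex^'n^'n) *v axis k 1 = col U k"
  by (simp add: vec_eq_iff matrix_vector_mult_def axis_def col_def if_distrib if_distribR cong: if_cong)

lemma adj_col: "unitary U \<Longrightarrow> adj U *v col U k = axis k 1"
proof -
  assume "unitary U"
  have "adj U *v col U k = adj U *v (U *v axis k 1)" by (simp add: mv_axis)
  also have "\<dots> = (adj U ** U) *v axis k 1" by (simp add: matrix_vector_mul_assoc)
  finally show ?thesis using \<open>unitary U\<close> by (simp add: unitary_def)
qed

lemma qform_decomp_col:
  assumes U: "unitary U"
  shows "Re (qform (U ** diag_mat d ** adj U) (col U k)) = d k"
  using U by (simp add: qform_decomp adj_col axis_def if_distrib if_distribR cong: if_cong)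

lemma norm_axis1: "norm ((axis k (1::complex)) :: complex^'n) = 1"
proof -
  have "(norm ((axis k (1::complex)) :: complex^'n))\<^sup>2 = (\<Sum>j\<in>UNIV. if j = k then 1 else 0)"
    unfolding norm_sq_vec by (rule sum.cong) (auto simp: axis_def)
  thus ?thesis by simp
qed

lemma norm_col: "unitary U \<Longrightarrow> norm (col U k) = 1"
  by (metis adj_col norm_axis1 unitary_norm)

lemma Re_qform_decomp:
  assumes U: "unitary U"
  shows "Re (qform (U ** diag_mat d ** adj U) x) = (\<Sum>k\<in>UNIV. d k * (norm ((adj U *v x) $ k))\<^sup>2)"
  using qform_decomp[OF U] by simp

lemma pos_def_decomp:
  assumes "pos_def M"
  shows "\<exists>U d. unitary U \<and> (\<forall>i. d i > 0) \<and> M = U ** diag_mat d ** adj U"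
proof -
  obtain U d where U: "unitary U" "M = U ** diag_mat d ** adj U"
    using spectral assms pos_def_def by blast
  have "d i > 0" for i
  proof -
    have "col U i \<noteq> 0" by (metis norm_col[OF U(1)] norm_zero zero_neq_one)
    hence "Re (qform M (col U i)) > 0" using assms by (simp add: pos_def_def)
    thus ?thesis using qform_decomp_col[OF U(1)] U(2) by simp
  qed
  thus ?thesis using U by blast
qed

lemma decomp_pos_def:
  fixes U :: "complex^'n^'n"
  assumes U: "unitary U" and d: "\<forall>i. d i > 0"
  shows "pos_def (U ** diag_mat d ** adj U)"
  unfolding pos_def_def
proof (intro conjI allI impI)
  show "hermitian (U ** diag_mat d ** adj U)" by (rule hermitian_decomp)
  fix x :: "complex^'n" assume "x \<noteq> 0"
  hence "adj U *v x \<noteq> 0" using unitary_norm[OF U, of x] by (metis norm_eq_zero)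
  then obtain j where j: "(adj U *v x) $ j \<noteq> 0" by (auto simp: vec_eq_iff)
  have "(\<Sum>k\<in>UNIV. d k * (norm ((adj U *v x) $ k))\<^sup>2) > 0"
    apply (rule sum_pos2[of UNIV j]) using j d by (auto intro!: mult_nonneg_nonneg simp: less_imp_le)
  thus "Re (qform (U ** diag_mat d ** adj U) x) > 0" using Re_qform_decomp[OF U] by simp
qed

lemma decomp_eigenvalues:
  assumes U: "unitary U"
  shows "eigenvalues (U ** diag_mat d ** adj U) = range d"
proof
  show "range d \<subseteq> eigenvalues (U ** diag_mat d ** adj U)"
  proof
    fix c assume "c \<in> range d"
    then obtain k where k: "c = d k" by blast
    have "(U ** diag_mat d ** adj U) *v col U k = U *v (diag_mat d *v (adj U *v col U k))"
      by (simp add: matrix_vector_mul_assoc matrix_mul_assoc)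
    also have "\<dots> = U *v (of_real (d k) *s axis k 1)"
    proof -
      have "diag_mat d *v axis k 1 = of_real (d k) *s axis k 1"
        by (simp add: diag_mult_vec vec_eq_iff axis_def)
      thus ?thesis using U by (simp add: adj_col)
    qed
    also have "\<dots> = of_real (d k) *s col U k"
      by (simp add: mv_axis[symmetric] vec_eq_iff matrix_vector_mult_def axis_def
          if_distrib if_distribR cong: if_cong)
    finally show "c \<in> eigenvalues (U ** diag_mat d ** adj U)"
      using norm_col[OF U, of k] k unfolding eigenvalues_def by (auto intro!: exI[of _ "col U k"])
  qed
next
  show "eigenvalues (U ** diag_mat d ** adj U) \<subseteq> range d"
  proof
    fix c assume "c \<in> eigenvalues (U ** diag_mat d ** adj U)"
    then obtain x where x: "x \<noteq> 0" "(U ** diag_mat d ** adj U) *v x = of_real c *s x"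
      unfolding eigenvalues_def by blast
    define w where "w = adj U *v x"
    have "w \<noteq> 0" using unitary_norm[OF U, of x] x(1) w_def by (metis norm_eq_zero)
    then obtain j where j: "w $ j \<noteq> 0" by (auto simp: vec_eq_iff)
    have "adj U *v ((U ** diag_mat d ** adj U) *v x) = diag_mat d *v w"
      using U by (simp add: w_def matrix_vector_mul_assoc matrix_mul_assoc[symmetric] unitary_cancel)
    moreover have "adj U *v (of_real c *s x) = of_real c *s w"
      by (simp add: w_def vec_eq_iff matrix_vector_mult_def sum_distrib_left mult_ac)
    ultimately have "diag_mat d *v w = of_real c *s w" using x(2) by simp
    hence "of_real (d j) * w $ j = of_real c * w $ j" by (simp add: diag_mult_vec vec_eq_iff)
    hence "d j = c" using j by simp
    thus "c \<in> range d" by auto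
  qed
qed

lemma decomp_lambda:
  assumes U: "unitary U"
  shows "lambda_max (U ** diag_mat d ** adj U) = Max (range d)"
    "lambda_min (U ** diag_mat d ** adj U) = Min (range d)"
  using decomp_eigenvalues[OF U] by (simp_all add: lambda_max_def lambda_min_def)

lemma decomp_mult:
  assumes U: "unitary U"
  shows "(U ** diag_mat d ** adj U) ** (U ** diag_mat e ** adj U) = U ** diag_mat (\<lambda>i. d i * e i) ** adj U"
  using U by (simp add: matrix_mul_assoc[symmetric] unitary_cancel diag_mult_diag[symmetric])

lemma decomp_add:
  "(U ** diag_mat d ** adj U) + (U ** diag_mat e ** adj U) = U ** diag_mat (\<lambda>i. d i + e i) ** adj U"
  by (simp add: diag_add matrix_add_ldistrib mm_add_r)

lemma decomp_diff:
  "(U ** diag_mat d ** adj U) - (U ** diag_mat e ** adj U) = U ** diag_mat (\<lambda>i. d i - e i) ** adj U"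
  by (simp add: diag_diff mm_diff_l mm_diff_r)

lemma decomp_scale:
  "c *\<^sub>R (U ** diag_mat d ** adj U) = U ** diag_mat (\<lambda>i. c * d i) ** adj U"
  by (simp add: diag_scaleR scalar_matrix_assoc matrix_scalar_ac)

lemma decomp_const:
  assumes U: "unitary U"
  shows "U ** diag_mat (\<lambda>i. c) ** adj U = c *\<^sub>R mat 1"
  using U by (simp add: diag_const matrix_scalar_ac scalar_matrix_assoc[symmetric] unitary_def)



lemma loewner_le_iff:
  "loewner_le P R \<longleftrightarrow> hermitian (R - P) \<and> (\<forall>x. Re (qform P x) \<le> Re (qform R x))"
  by (simp add: loewner_le_def pos_semidef_def qform_diff)

lemma Re_qform_id: "Re (qform (c *\<^sub>R mat 1) x) = c * (norm x)\<^sup>2"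
  by (simp add: qform_scaleR qform_mat1)

lemma decomp_lower:
  fixes U :: "complex^'n^'n"
  assumes U: "unitary U" and "\<forall>i. m \<le> d i"
  shows "m * (norm x)\<^sup>2 \<le> Re (qform (U ** diag_mat d ** adj U) x)"
proof -
  have "m * (norm x)\<^sup>2 = (\<Sum>k\<in>UNIV. m * (norm ((adj U *v x) $ k))\<^sup>2)"
    by (simp add: sum_distrib_left[symmetric] sum_norm_adj[OF U])
  also have "\<dots> \<le> (\<Sum>k\<in>UNIV. d k * (norm ((adj U *v x) $ k))\<^sup>2)"
    by (rule sum_mono) (use assms(2) in \<open>auto intro: mult_right_mono\<close>)
  finally show ?thesis by (simp add: Re_qform_decomp[OF U])
qed

lemma decomp_upper:
  fixes U :: "complex^'n^'n"
  assumes U: "unitary U" and "\<forall>i. d i \<le> M"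
  shows "Re (qform (U ** diag_mat d ** adj U) x) \<le> M * (norm x)\<^sup>2"
proof -
  have "(\<Sum>k\<in>UNIV. d k * (norm ((adj U *v x) $ k))\<^sup>2) \<le> (\<Sum>k\<in>UNIV. M * (norm ((adj U *v x) $ k))\<^sup>2)"
    by (rule sum_mono) (use assms(2) in \<open>auto intro: mult_right_mono\<close>)
  also have "\<dots> = M * (norm x)\<^sup>2"
    by (simp add: sum_distrib_left[symmetric] sum_norm_adj[OF U])
  finally show ?thesis by (simp add: Re_qform_decomp[OF U])
qed

lemma decomp_eig_lower:
  fixes U :: "complex^'n^'n"
  assumes U: "unitary U" and "\<forall>x. m * (norm x)\<^sup>2 \<le> Re (qform (U ** diag_mat d ** adj U) x)"
  shows "m \<le> d i"
  using assms(2)[rule_format, of "col U i"] qform_decomp_col[OF U] norm_col[OF U] by simp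

lemma decomp_eig_upper:
  fixes U :: "complex^'n^'n"
  assumes U: "unitary U" and "\<forall>x. Re (qform (U ** diag_mat d ** adj U) x) \<le> M * (norm x)\<^sup>2"
  shows "d i \<le> M"
  using assms(2)[rule_format, of "col U i"] qform_decomp_col[OF U] norm_col[OF U] by simp

lemma qform_conj: "qform (adj A ** P ** A) x = qform P (A *v x)"
proof -
  have "qform (adj A ** P ** A) x = cinner x (adj A *v (P *v (A *v x)))"
    by (simp add: qform_cinner matrix_vector_mul_assoc matrix_mul_assoc)
  also have "\<dots> = cinner (A *v x) (P *v (A *v x))" by (simp add: cinner_adj)
  finally show ?thesis by (simp add: qform_cinner)
qed

lemma hermitian_conj: "hermitian P \<Longrightarrow> hermitian (adj A ** P ** A)"
  by (simp add: hermitian_def adj_mult matrix_mul_assoc)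

lemma hermitian_add: "hermitian P \<Longrightarrow> hermitian R \<Longrightarrow> hermitian (P + R)"
  by (simp add: hermitian_def adj_add)
lemma hermitian_diff: "hermitian P \<Longrightarrow> hermitian R \<Longrightarrow> hermitian (P - R)"
  by (simp add: hermitian_def adj_diff)
lemma hermitian_scaleR: "hermitian P \<Longrightarrow> hermitian (c *\<^sub>R P)"
  by (simp add: hermitian_def adj_scaleR)
lemma hermitian_id: "hermitian (c *\<^sub>R mat 1)"
  by (simp add: hermitian_def adj_scaleR)

lemma mfun_comp:
  fixes U :: "complex^'n^'n"
  assumes U: "unitary U" and d: "\<forall>i. d i > 0" and f: "\<forall>i. f (d i) > 0"
  shows "mfun g (mfun f (U ** diag_mat d ** adj U)) = U ** diag_mat (\<lambda>i. g (f (d i))) ** adj U"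
  using mfun_decomp[OF U d, of f] mfun_decomp[OF U f, of g] by simp

lemma spec_norm_bound:
  fixes A :: "complex^'n^'n"
  shows "norm (A *v x) \<le> spec_norm A * norm x"
proof -
  have "linear (\<lambda>x. A *v x)" by (rule matrix_vector_mul_linear)
  hence "bounded_linear (\<lambda>x. A *v x)" by (simp add: linear_conv_bounded_linear)
  thus ?thesis unfolding spec_norm_def by (rule onorm)
qed

lemma spec_norm_nonneg: "spec_norm (A::complex^'n^'n) \<ge> 0"
proof -
  have "linear (\<lambda>x. A *v x)" by (rule matrix_vector_mul_linear)
  hence "bounded_linear (\<lambda>x. A *v x)" by (simp add: linear_conv_bounded_linear)
  thus ?thesis unfolding spec_norm_def by (rule onorm_pos_le)
qed



definition SP :: "real \<Rightarrow> real \<Rightarrow> (complex^'n^'n) set" where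
  "SP m M = {Y. \<exists>U d. unitary U \<and> (\<forall>i. m \<le> d i \<and> d i \<le> M) \<and> Y = U ** diag_mat d ** adj U}"

lemma continuous_on_mm:
  "continuous_on S F \<Longrightarrow> continuous_on S G \<Longrightarrow> continuous_on S (\<lambda>Y. (F Y :: complex^'n^'n) ** G Y)"
  unfolding matrix_matrix_mult_def by (intro continuous_intros)

lemma norm_vec_le_sum: "norm (x::'a::real_normed_vector^'n) \<le> (\<Sum>i\<in>UNIV. norm (x $ i))"
  unfolding norm_vec_def by (rule L2_set_le_sum) auto

lemma cont_cong: "(\<And>Y. Y \<in> S \<Longrightarrow> F Y = G Y) \<Longrightarrow> continuous_on S G \<Longrightarrow> continuous_on S F"
  using continuous_on_cong by blast

lemma norm_nth_le_vec: "norm ((x::complex^'n) $ i) \<le> norm x"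
  unfolding norm_vec_def by (rule member_le_L2_set) auto

lemma unitary_entry_le: "unitary U \<Longrightarrow> norm (U $ i $ k) \<le> 1"
  using norm_nth_le_vec[of "col U k" i] norm_col[of U k] by (simp add: col_def)

lemma decomp_entry:
  "(U ** diag_mat h ** adj U) $ i $ j = (\<Sum>k\<in>UNIV. U $ i $ k * of_real (h k) * cnj (U $ j $ k))"
  unfolding matrix_matrix_mult_def[of "U ** diag_mat h" "adj U"] by (simp add: mult_diag_right adj_def)

lemma decomp_norm_bound:
  fixes U :: "complex^'n^'n"
  assumes U: "unitary U" and h: "\<forall>k. \<bar>h k\<bar> \<le> e"
  shows "norm (U ** diag_mat h ** adj U) \<le> real (CARD('n))^3 * e"
proof -
  have e0: "e \<ge> 0" using h by (meson abs_ge_zero order_trans)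
  have ent: "norm ((U ** diag_mat h ** adj U) $ i $ j) \<le> real (CARD('n)) * e" for i j
  proof -
    have "norm ((U ** diag_mat h ** adj U) $ i $ j) \<le> (\<Sum>k\<in>UNIV. norm (U $ i $ k * of_real (h k) * cnj (U $ j $ k)))"
      unfolding decomp_entry by (rule norm_sum)
    also have "\<dots> \<le> (\<Sum>k\<in>(UNIV::'n set). e)"
    proof (rule sum_mono)
      fix k
      have "norm (U $ i $ k * of_real (h k) * cnj (U $ j $ k)) = norm (U $ i $ k) * \<bar>h k\<bar> * norm (U $ j $ k)"
        by (simp add: norm_mult)
      also have "\<dots> \<le> 1 * e * 1"
        using unitary_entry_le[OF U, of i k] unitary_entry_le[OF U, of j k] h e0
        by (intro mult_mono) auto
      finally show "norm (U $ i $ k * of_real (h k) * cnj (U $ j $ k)) \<le> e" by simp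
    qed
    finally show ?thesis by simp
  qed
  have row: "norm ((U ** diag_mat h ** adj U) $ i) \<le> real (CARD('n)) * (real (CARD('n)) * e)" for i
  proof -
    have "norm ((U ** diag_mat h ** adj U) $ i) \<le> (\<Sum>j\<in>UNIV. norm ((U ** diag_mat h ** adj U) $ i $ j))"
      by (rule norm_vec_le_sum)
    also have "\<dots> \<le> (\<Sum>j\<in>(UNIV::'n set). real (CARD('n)) * e)" by (rule sum_mono) (rule ent)
    finally show ?thesis by simp
  qed
  have "norm (U ** diag_mat h ** adj U) \<le> (\<Sum>i\<in>UNIV. norm ((U ** diag_mat h ** adj U) $ i))"
    by (rule norm_vec_le_sum)
  also have "\<dots> \<le> (\<Sum>i\<in>(UNIV::'n set). real (CARD('n)) * (real (CARD('n)) * e))"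
    by (rule sum_mono) (rule row)
  finally show ?thesis by (simp add: power3_eq_cube mult_ac)
qed

lemma SP_obtain:
  assumes "Y \<in> SP m M" "m > 0"
  obtains U d where "unitary U" "\<forall>i. d i > 0" "\<forall>i. m \<le> d i \<and> d i \<le> M" "Y = U ** diag_mat d ** adj U"
proof -
  from assms(1) obtain U d where "unitary U" "\<forall>i. m \<le> d i \<and> d i \<le> M" "Y = U ** diag_mat d ** adj U"
    unfolding SP_def by blast
  moreover hence "\<forall>i. d i > 0" using assms(2) by (meson less_le_trans)
  ultimately show ?thesis using that by blast
qed

lemma mfun_add_SP:
  "Y \<in> SP m M \<Longrightarrow> m > 0 \<Longrightarrow> mfun (\<lambda>x. f x + g x) Y = mfun f Y + mfun g Y"
  by (erule SP_obtain) (simp_all add: mfun_decomp decomp_add)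

lemma mfun_mult_SP:
  "Y \<in> SP m M \<Longrightarrow> m > 0 \<Longrightarrow> mfun (\<lambda>x. f x * g x) Y = mfun f Y ** mfun g Y"
  by (erule SP_obtain) (simp_all add: mfun_decomp decomp_mult)

lemma mfun_diff_SP:
  "Y \<in> SP m M \<Longrightarrow> m > 0 \<Longrightarrow> mfun (\<lambda>x. f x - g x) Y = mfun f Y - mfun g Y"
  by (erule SP_obtain) (simp_all add: mfun_decomp decomp_diff)

lemma mfun_const_SP:
  "Y \<in> SP m M \<Longrightarrow> m > 0 \<Longrightarrow> mfun (\<lambda>x. c) Y = c *\<^sub>R mat 1"
  by (erule SP_obtain) (simp_all add: mfun_decomp decomp_const)

lemma mfun_id_SP:
  "Y \<in> SP m M \<Longrightarrow> m > 0 \<Longrightarrow> mfun (\<lambda>x. x) Y = Y"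
  by (erule SP_obtain) (simp_all add: mfun_decomp)

lemma mfun_approx_SP:
  fixes Y :: "complex^'n^'n"
  assumes "Y \<in> SP m M" "m > 0" "\<forall>x\<in>{m..M}. \<bar>f x - g x\<bar> \<le> e"
  shows "norm (mfun f Y - mfun g Y) \<le> real (CARD('n))^3 * e"
  using assms(1,2)
proof (rule SP_obtain)
  fix U d assume U: "unitary U" "\<forall>i. d i > 0" "\<forall>i. m \<le> d i \<and> d i \<le> M" "Y = U ** diag_mat d ** adj U"
  have "mfun f Y - mfun g Y = U ** diag_mat (\<lambda>i. f (d i) - g (d i)) ** adj U"
    using U by (simp add: mfun_decomp decomp_diff)
  moreover have "\<forall>k. \<bar>f (d k) - g (d k)\<bar> \<le> e" using U(3) assms(3) by auto
  ultimately show ?thesis using decomp_norm_bound[OF U(1)] by simp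
qed

lemma mfun_continuous_SP:
  fixes f :: "real \<Rightarrow> real"
  assumes m: "m > 0" and f: "continuous_on {m..M} f"
  shows "continuous_on (SP m M :: (complex^'n^'n) set) (mfun f)"
proof -
  define C where "C = real (CARD('n))^3"
  have C: "C > 0" by (simp add: C_def)
  let ?P = "\<lambda>g. continuous_on {m..M} g \<and> continuous_on (SP m M :: (complex^'n^'n) set) (mfun g)"
  have approx: "\<exists>g. ?P g \<and> (\<forall>x\<in>{m..M}. \<bar>f x - g x\<bar> < e)" if "e > 0" for e
  proof (rule Stone_Weierstrass_HOL[OF compact_Icc _ _ _ _ _ f that])
    show "?P (\<lambda>x. c)" for c
      by (auto intro!: cont_cong[OF mfun_const_SP[OF _ m]])
    show "continuous_on {m..M} g" if "?P g" for g using that by simp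
    show "?P (\<lambda>x. g x + h x)" if "?P g \<and> ?P h" for g h
      using that by (auto intro!: cont_cong[OF mfun_add_SP[OF _ m]] continuous_on_add)
    show "?P (\<lambda>x. g x * h x)" if "?P g \<and> ?P h" for g h
      using that by (auto intro!: cont_cong[OF mfun_mult_SP[OF _ m]] continuous_on_mult continuous_on_mm)
    show "\<exists>g. ?P g \<and> g x \<noteq> g y" if "x \<in> {m..M} \<and> y \<in> {m..M} \<and> x \<noteq> y" for x y
    proof -
      have "?P (\<lambda>x. x)"
        by (auto intro!: cont_cong[OF mfun_id_SP[OF _ m]] continuous_on_id)
      thus ?thesis using that by (intro exI[of _ "\<lambda>x. x"]) auto
    qed
  qed
  show ?thesis unfolding continuous_on_iff
  proof (intro ballI allI impI)
    fix Y0 :: "complex^'n^'n" and e :: real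
    assume Y0: "Y0 \<in> SP m M" and e: "e > 0"
    obtain g where g: "?P g" "\<forall>x\<in>{m..M}. \<bar>f x - g x\<bar> < e / (3 * C)"
      using approx[of "e / (3 * C)"] e C by auto
    have gb: "norm (mfun f Y - mfun g Y) \<le> e / 3" if "Y \<in> SP m M" for Y :: "complex^'n^'n"
    proof -
      have "norm (mfun f Y - mfun g Y) \<le> C * (e / (3 * C))"
        unfolding C_def using mfun_approx_SP[OF that m, of f g "e / (3 * C)"] g(2) C_def
        by (simp add: less_imp_le)
      thus ?thesis using C by simp
    qed
    have e3: "e / 3 > 0" using e by simp
    have "continuous_on (SP m M :: (complex^'n^'n) set) (mfun g)" using g(1) by simp
    hence "\<exists>d>0. \<forall>Y\<in>SP m M. dist Y Y0 < d \<longrightarrow> dist (mfun g Y) (mfun g Y0) < e / 3"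
      unfolding continuous_on_iff using Y0 e3 by blast
    then obtain d where d: "d > 0" "\<forall>Y\<in>SP m M. dist Y Y0 < d \<longrightarrow> dist (mfun g Y) (mfun g Y0) < e / 3"
      by blast
    show "\<exists>d>0. \<forall>Y\<in>SP m M. dist Y Y0 < d \<longrightarrow> dist (mfun f Y) (mfun f Y0) < e"
    proof (intro exI conjI ballI impI)
      fix Y assume Y: "Y \<in> SP m M" "dist Y Y0 < d"
      have tri: "norm (a + b + c) \<le> norm a + norm b + norm c" for a b c :: "complex^'n^'n"
        using norm_triangle_ineq[of "a+b" c] norm_triangle_ineq[of a b] by linarith
      have "mfun f Y - mfun f Y0 = (mfun f Y - mfun g Y) + (mfun g Y - mfun g Y0) + (mfun g Y0 - mfun f Y0)"
        by simp
      hence "dist (mfun f Y) (mfun f Y0) \<le> norm (mfun f Y - mfun g Y) + dist (mfun g Y) (mfun g Y0)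
             + norm (mfun f Y0 - mfun g Y0)"
        using tri[of "mfun f Y - mfun g Y" "mfun g Y - mfun g Y0" "mfun g Y0 - mfun f Y0"]
        by (simp add: dist_norm norm_minus_commute[of "mfun g Y0"])
      also have "\<dots> < e / 3 + e / 3 + e / 3"
        using gb[OF Y(1)] gb[OF Y0] d(2) Y by (intro add_le_less_mono add_less_le_mono) auto
      finally show "dist (mfun f Y) (mfun f Y0) < e" by simp
    qed (use d in auto)
  qed
qed



definition Kf :: "real \<Rightarrow> real \<Rightarrow> real \<Rightarrow> real" where
  "Kf r d l = indicator {0<..} l * l powr (r - 1) * (d / (d + l))"

lemma Kf_meas[measurable]: "(\<lambda>l. Kf r d l) \<in> borel_measurable borel"
  unfolding Kf_def by measurable

lemma Kf_nonneg: "d > 0 \<Longrightarrow> Kf r d l \<ge> 0"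
  by (auto simp: Kf_def indicator_def)

definition I1 :: "real \<Rightarrow> ennreal" where
  "I1 r = (\<integral>\<^sup>+ l. ennreal (Kf r 1 l) \<partial>lborel)"

lemma Kf_scale:
  assumes d: "d > 0"
  shows "Kf r d (d * x) = d powr (r - 1) * Kf r 1 x"
proof (cases "x > 0")
  case True
  have "(d * x) powr (r - 1) = d powr (r - 1) * x powr (r - 1)"
    using d True by (simp add: powr_mult)
  moreover have "d + d * x \<noteq> 0" using d True by (smt (verit) mult_pos_pos)
  hence "d / (d + d * x) = 1 / (1 + x)" using d True by (simp add: field_simps)
  ultimately show ?thesis using True d by (simp add: Kf_def)
next
  case False
  hence "\<not> d * x > 0" using d by (simp add: zero_less_mult_iff)
  thus ?thesis using False by (simp add: Kf_def)
qed

lemma Kf_integral: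
  assumes d: "d > 0"
  shows "(\<integral>\<^sup>+ l. ennreal (Kf r d l) \<partial>lborel) = ennreal (d powr r) * I1 r"
proof -
  have "(\<integral>\<^sup>+ l. ennreal (Kf r d l) \<partial>lborel)
      = ennreal \<bar>d\<bar> * (\<integral>\<^sup>+ x. ennreal (Kf r d (0 + d * x)) \<partial>lborel)"
    by (rule nn_integral_real_affine) (use d in auto)
  also have "(\<integral>\<^sup>+ x. ennreal (Kf r d (0 + d * x)) \<partial>lborel)
      = (\<integral>\<^sup>+ x. ennreal (d powr (r - 1)) * ennreal (Kf r 1 x) \<partial>lborel)"
    by (intro nn_integral_cong) (simp add: Kf_scale[OF d] ennreal_mult Kf_nonneg)
  also have "\<dots> = ennreal (d powr (r - 1)) * I1 r"
    unfolding I1_def by (rule nn_integral_cmult) measurable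
  finally have "(\<integral>\<^sup>+ l. ennreal (Kf r d l) \<partial>lborel) = ennreal (d * d powr (r - 1)) * I1 r"
    using d by (simp add: ennreal_mult mult.assoc)
  moreover have "d * d powr (r - 1) = d powr r"
    using d by (simp add: powr_diff)
  ultimately show ?thesis by simp
qed

lemma I1_pos: assumes "0 < r" "r < 1" shows "I1 r > 0"
proof -
  have "(\<integral>\<^sup>+ l. ennreal (indicator {1..2::real} l * (1/6)) \<partial>lborel) \<le> I1 r"
    unfolding I1_def
  proof (rule nn_integral_mono)
    fix l :: real
    show "ennreal (indicator {1..2::real} l * (1/6)) \<le> ennreal (Kf r 1 l)"
    proof (cases "l \<in> {1..2}")
      case True
      have "l powr (r - 1) \<ge> l powr (-1)" using True assms by (intro powr_mono) auto
      moreover have "l powr (-1) = 1 / l" using True by (simp add: powr_minus divide_inverse)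
      moreover have "1 / l \<ge> 1/2" using True by (simp add: field_simps)
      ultimately have a: "l powr (r - 1) \<ge> 1/2" by linarith
      have b: "1 / (1 + l) \<ge> 1/3" using True by (simp add: field_simps)
      have "(1/2) * (1/3) \<le> l powr (r - 1) * (1 / (1 + l))"
        using a b by (intro mult_mono) auto
      thus ?thesis using True by (simp add: Kf_def)
    next
      case False
      thus ?thesis by simp
    qed
  qed
  moreover have "(\<integral>\<^sup>+ l. ennreal (indicator {1..2::real} l * (1/6)) \<partial>lborel) = ennreal (1/6)"
  proof -
    have "(\<integral>\<^sup>+ l. ennreal (indicator {1..2::real} l * (1/6)) \<partial>lborel)
        = (\<integral>\<^sup>+ l. ennreal (1/6) * indicator {1..2::real} l \<partial>lborel)"
      by (intro nn_integral_cong) (auto simp: indicator_def)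
    also have "\<dots> = ennreal (1/6)" by (simp add: nn_integral_cmult_indicator)
    finally show ?thesis .
  qed
  ultimately show ?thesis by (metis ennreal_less_zero_iff order_less_le_trans zero_less_divide_1_iff zero_less_numeral)
qed

lemma I1_finite: assumes "0 < r" "r < 1" shows "I1 r < \<infinity>"
proof -
  have h1: "((\<lambda>x. x powr (r - 1)) has_integral (1 powr (r - 1 + 1) / (r - 1 + 1))) {0..1}"
    by (rule has_integral_powr_from_0) (use assms in auto)
  have h2: "((\<lambda>x. x powr (r - 2)) has_integral (-(1 powr (r - 2 + 1)) / (r - 2 + 1))) {1..}"
    by (rule has_integral_powr_to_inf) (use assms in auto)
  have n1: "(\<integral>\<^sup>+ x. ennreal (indicator {0..1} x * x powr (r - 1)) \<partial>lborel) = ennreal (1 / r)"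
    using nn_integral_has_integral_lebesgue[OF _ h1] by simp
  have n2: "(\<integral>\<^sup>+ x. ennreal (indicator {1..} x * x powr (r - 2)) \<partial>lborel) = ennreal (1 / (1 - r))"
  proof -
    have "-(1 / (r - 1)) = 1 / (1 - r)" by (metis minus_diff_eq minus_divide_right)
    thus ?thesis using nn_integral_has_integral_lebesgue[OF _ h2] by simp
  qed
  have "I1 r \<le> (\<integral>\<^sup>+ x. ennreal (indicator {0..1} x * x powr (r - 1)) + ennreal (indicator {1..} x * x powr (r - 2)) \<partial>lborel)"
    unfolding I1_def
  proof (rule nn_integral_mono)
    fix l :: real
    show "ennreal (Kf r 1 l) \<le> ennreal (indicator {0..1} l * l powr (r - 1)) + ennreal (indicator {1..} l * l powr (r - 2))"
    proof (cases "l > 0")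
      case False thus ?thesis by (simp add: Kf_def)
    next
      case True
      show ?thesis
      proof (cases "l \<le> 1")
        case True
        have "l powr (r - 1) * (1 / (1 + l)) \<le> l powr (r - 1) * 1"
          using \<open>l > 0\<close> by (intro mult_left_mono) (auto simp: field_simps)
        hence "Kf r 1 l \<le> indicator {0..1} l * l powr (r - 1)"
          using True \<open>l > 0\<close> by (simp add: Kf_def)
        thus ?thesis by (metis add_increasing2 ennreal_leI zero_le)
      next
        case False
        have "l powr (r - 1) * (1 / (1 + l)) \<le> l powr (r - 1) * (1 / l)"
          using \<open>l > 0\<close> by (intro mult_left_mono) (auto simp: field_simps)
        also have "\<dots> = l powr (r - 2)"
          using \<open>l > 0\<close> by (simp add: powr_diff powr_add field_simps power2_eq_square)
        finally have "Kf r 1 l \<le> indicator {1..} l * l powr (r - 2)"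
          using False \<open>l > 0\<close> by (simp add: Kf_def)
        thus ?thesis by (metis add_increasing ennreal_leI zero_le)
      qed
    qed
  qed
  also have "\<dots> = ennreal (1 / r) + ennreal (1 / (1 - r))"
    by (subst nn_integral_add) (auto simp: n1 n2)
  also have "\<dots> = ennreal (1 / r + 1 / (1 - r))"
    using assms by (intro ennreal_plus[symmetric]) auto
  also have "\<dots> < \<infinity>" by simp
  finally show ?thesis .
qed


lemma inv_var:
  fixes M N :: "complex^'n^'n"
  assumes hM: "hermitian M" and hN: "hermitian N" and NM: "N ** M = mat 1"
    and psd: "\<forall>w. Re (qform N w) \<ge> 0"
  shows "2 * Re (cinner w v) - Re (qform N w) \<le> Re (qform M v)"
    and "2 * Re (cinner (M *v v) v) - Re (qform N (M *v v)) = Re (qform M v)"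
proof -
  define u where "u = M *v v"
  have Nu: "N *v u = v" using NM by (simp add: u_def matrix_vector_mul_assoc)
  have c1: "cinner u (N *v w) = cinner v w" using hermitian_cinner[OF hN, of u w] Nu by simp
  have c2: "Re (cinner v w) = Re (cinner w v)" by (subst cinner_commute) simp
  have c3: "Re (cinner u v) = Re (qform M v)"
    by (simp add: u_def qform_cinner) (subst cinner_commute, simp)
  have "qform N (w - u) = cinner w (N *v w) - cinner w v - cinner u (N *v w) + cinner u v"
    by (simp add: qform_cinner matrix_vector_mult_diff_distrib Nu cinner_diff_left cinner_diff_right)
  hence "Re (qform N (w - u)) = Re (qform N w) - 2 * Re (cinner w v) + Re (qform M v)"
    using c1 c2 c3 by (simp add: qform_cinner)
  thus "2 * Re (cinner w v) - Re (qform N w) \<le> Re (qform M v)" using psd[rule_format, of "w - u"] by simp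
  have "Re (qform N u) = Re (qform M v)" using c3 by (simp add: qform_cinner Nu)
  moreover have "Re (cinner (M *v v) v) = Re (qform M v)" using c3 by (simp add: u_def)
  ultimately show "2 * Re (cinner (M *v v) v) - Re (qform N (M *v v)) = Re (qform M v)"
    by (simp add: u_def)
qed

lemma inv_mono:
  fixes M1 N1 M2 N2 :: "complex^'n^'n"
  assumes "hermitian M1" "hermitian N1" "N1 ** M1 = mat 1" "\<forall>w. Re (qform N1 w) \<ge> 0"
    and "hermitian M2" "hermitian N2" "N2 ** M2 = mat 1" "\<forall>w. Re (qform N2 w) \<ge> 0"
    and le: "\<forall>w. Re (qform N1 w) \<le> Re (qform N2 w)"
  shows "Re (qform M2 v) \<le> Re (qform M1 v)"
proof -
  let ?u = "M2 *v v"
  have "Re (qform M2 v) = 2 * Re (cinner ?u v) - Re (qform N2 ?u)"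
    using inv_var(2)[OF assms(5-8)] by simp
  also have "\<dots> \<le> 2 * Re (cinner ?u v) - Re (qform N1 ?u)" using le by simp
  also have "\<dots> \<le> Re (qform M1 v)" by (rule inv_var(1)[OF assms(1-4)])
  finally show ?thesis .
qed

lemma resolvent_facts:
  fixes U :: "complex^'n^'n"
  assumes U: "unitary U" and d: "\<forall>i. d i > 0" and l: "l > 0"
  defines "Y \<equiv> U ** diag_mat d ** adj U"
  shows "hermitian (mfun (\<lambda>z. 1 / (z + l)) Y)" "hermitian (Y + l *\<^sub>R mat 1)"
    "(Y + l *\<^sub>R mat 1) ** mfun (\<lambda>z. 1 / (z + l)) Y = mat 1"
    "\<forall>w. Re (qform (Y + l *\<^sub>R mat 1) w) \<ge> 0"
proof -
  have N: "Y + l *\<^sub>R mat 1 = U ** diag_mat (\<lambda>i. d i + l) ** adj U"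
    using U by (simp add: Y_def decomp_const[OF U, symmetric] decomp_add)
  have M: "mfun (\<lambda>z. 1 / (z + l)) Y = U ** diag_mat (\<lambda>i. 1 / (d i + l)) ** adj U"
    using U d by (simp add: Y_def mfun_decomp)
  show "hermitian (mfun (\<lambda>z. 1 / (z + l)) Y)" "hermitian (Y + l *\<^sub>R mat 1)"
    by (simp_all add: N M hermitian_decomp)
  have "\<forall>i. (d i + l) * (1 / (d i + l)) = 1" using d l by (metis add_pos_pos less_irrefl nonzero_mult_div_cancel_left div_by_1 times_divide_eq_right)
  hence "(Y + l *\<^sub>R mat 1) ** mfun (\<lambda>z. 1 / (z + l)) Y = U ** diag_mat (\<lambda>i. 1) ** adj U"
    unfolding N M decomp_mult[OF U] by simp
  thus "(Y + l *\<^sub>R mat 1) ** mfun (\<lambda>z. 1 / (z + l)) Y = mat 1"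
    using decomp_const[OF U, of 1] by simp
  show "\<forall>w. Re (qform (Y + l *\<^sub>R mat 1) w) \<ge> 0"
  proof
    fix w
    have "0 * (norm w)\<^sup>2 \<le> Re (qform (Y + l *\<^sub>R mat 1) w)"
      unfolding N by (rule decomp_lower[OF U]) (use d l in \<open>auto intro: less_imp_le add_pos_pos\<close>)
    thus "Re (qform (Y + l *\<^sub>R mat 1) w) \<ge> 0" by simp
  qed
qed

lemma resolvent_mono:
  fixes Y Z :: "complex^'n^'n"
  assumes Y: "pos_def Y" and Z: "pos_def Z" and YZ: "loewner_le Y Z" and l: "l > 0"
  shows "Re (qform (mfun (\<lambda>z. 1 / (z + l)) Z) x) \<le> Re (qform (mfun (\<lambda>z. 1 / (z + l)) Y) x)"
proof -
  obtain U d where U: "unitary U" "\<forall>i. d i > 0" "Y = U ** diag_mat d ** adj U"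
    using pos_def_decomp[OF Y] by blast
  obtain V e where V: "unitary V" "\<forall>i. e i > 0" "Z = V ** diag_mat e ** adj V"
    using pos_def_decomp[OF Z] by blast
  note RY = resolvent_facts[OF U(1,2) l, folded U(3)]
  note RZ = resolvent_facts[OF V(1,2) l, folded V(3)]
  have "\<forall>w. Re (qform (Y + l *\<^sub>R mat 1) w) \<le> Re (qform (Z + l *\<^sub>R mat 1) w)"
    using YZ by (simp add: loewner_le_iff qform_add)
  thus ?thesis by (rule inv_mono[OF RY RZ])
qed

lemma qrep:
  fixes Y :: "complex^'n^'n"
  assumes Y: "pos_def Y"
  shows "ennreal (Re (qform (mfun (\<lambda>z. z powr r) Y) x)) * I1 r =
    (\<integral>\<^sup>+ l. ennreal (indicator {0<..} l * l powr (r - 1) *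
        ((norm x)\<^sup>2 - l * Re (qform (mfun (\<lambda>z. 1 / (z + l)) Y) x))) \<partial>lborel)"
proof -
  obtain U d where U: "unitary U" "\<forall>i. d i > 0" "Y = U ** diag_mat d ** adj U"
    using pos_def_decomp[OF Y] by blast
  define w where "w k = (norm ((adj U *v x) $ k))\<^sup>2" for k
  have w0: "w k \<ge> 0" for k by (simp add: w_def)
  have sw: "(\<Sum>k\<in>UNIV. w k) = (norm x)\<^sup>2" using sum_norm_adj[OF U(1)] by (simp add: w_def)
  have q1: "Re (qform (mfun (\<lambda>z. z powr r) Y) x) = (\<Sum>k\<in>UNIV. d k powr r * w k)"
    using U by (simp add: mfun_decomp Re_qform_decomp w_def)
  have q2: "Re (qform (mfun (\<lambda>z. 1 / (z + l)) Y) x) = (\<Sum>k\<in>UNIV. 1 / (d k + l) * w k)" for l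
    using U by (simp add: mfun_decomp Re_qform_decomp w_def)
  have "ennreal (\<Sum>k\<in>UNIV. d k powr r * w k) * I1 r = (\<Sum>k\<in>UNIV. ennreal (d k powr r * w k) * I1 r)"
  proof -
    have "ennreal (\<Sum>k\<in>UNIV. d k powr r * w k) = (\<Sum>k\<in>UNIV. ennreal (d k powr r * w k))"
      by (rule sum_ennreal[symmetric]) (simp add: w0)
    thus ?thesis by (simp add: sum_distrib_right)
  qed
  also have "\<dots> = (\<Sum>k\<in>UNIV. (\<integral>\<^sup>+ l. ennreal (w k * Kf r (d k) l) \<partial>lborel))"
  proof (rule sum.cong[OF refl])
    fix k
    have "ennreal (d k powr r * w k) * I1 r = ennreal (w k) * (ennreal (d k powr r) * I1 r)"
      using w0 by (simp add: ennreal_mult mult_ac)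
    also have "\<dots> = ennreal (w k) * (\<integral>\<^sup>+ l. ennreal (Kf r (d k) l) \<partial>lborel)"
      using Kf_integral[of "d k" r] U(2) by simp
    also have "\<dots> = (\<integral>\<^sup>+ l. ennreal (w k) * ennreal (Kf r (d k) l) \<partial>lborel)"
      by (rule nn_integral_cmult[symmetric]) measurable
    also have "\<dots> = (\<integral>\<^sup>+ l. ennreal (w k * Kf r (d k) l) \<partial>lborel)"
      by (intro nn_integral_cong) (simp add: ennreal_mult' w0)
    finally show "ennreal (d k powr r * w k) * I1 r = (\<integral>\<^sup>+ l. ennreal (w k * Kf r (d k) l) \<partial>lborel)" .
  qed
  also have "\<dots> = (\<integral>\<^sup>+ l. (\<Sum>k\<in>UNIV. ennreal (w k * Kf r (d k) l)) \<partial>lborel)"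
    by (rule nn_integral_sum[symmetric]) measurable
  also have "\<dots> = (\<integral>\<^sup>+ l. ennreal (indicator {0<..} l * l powr (r - 1) *
        ((norm x)\<^sup>2 - l * Re (qform (mfun (\<lambda>z. 1 / (z + l)) Y) x))) \<partial>lborel)"
  proof (rule nn_integral_cong)
    fix l :: real
    have nn: "0 \<le> w k * Kf r (d k) l" for k using w0 Kf_nonneg U(2) by (simp add: mult_nonneg_nonneg)
    have "(\<Sum>k\<in>UNIV. w k * Kf r (d k) l) = indicator {0<..} l * l powr (r - 1) *
        ((norm x)\<^sup>2 - l * Re (qform (mfun (\<lambda>z. 1 / (z + l)) Y) x))"
    proof (cases "l > 0")
      case False thus ?thesis by (simp add: Kf_def)
    next
      case True
      have "(\<Sum>k\<in>UNIV. w k * Kf r (d k) l) = l powr (r - 1) * (\<Sum>k\<in>UNIV. w k * (d k / (d k + l)))"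
        using True by (simp add: Kf_def sum_distrib_left mult_ac)
      moreover have "(\<Sum>k\<in>UNIV. w k * (d k / (d k + l))) = (\<Sum>k\<in>UNIV. w k) - l * (\<Sum>k\<in>UNIV. 1 / (d k + l) * w k)"
      proof -
        have "w k * (d k / (d k + l)) = w k - l * (1 / (d k + l) * w k)" for k
        proof -
          have "d k + l > 0" using True U(2) by (simp add: add_pos_pos)
          thus ?thesis by (simp add: field_simps)
        qed
        thus ?thesis by (simp add: sum_subtractf sum_distrib_left)
      qed
      ultimately show ?thesis using True by (simp add: sw q2)
    qed
    thus "(\<Sum>k\<in>UNIV. ennreal (w k * Kf r (d k) l)) = ennreal (indicator {0<..} l * l powr (r - 1) *
        ((norm x)\<^sup>2 - l * Re (qform (mfun (\<lambda>z. 1 / (z + l)) Y) x)))"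
      using nn by (simp add: sum_ennreal)
  qed
  finally show ?thesis using q1 by simp
qed

lemma mfun_hermitian: "pos_def Y \<Longrightarrow> hermitian (mfun f Y)"
  by (metis pos_def_decomp mfun_decomp hermitian_decomp)

lemma mfun_pow_nonneg: "pos_def Y \<Longrightarrow> Re (qform (mfun (\<lambda>z. z powr r) Y) x) \<ge> 0"
proof -
  assume "pos_def Y"
  then obtain U d where U: "unitary U" "\<forall>i. d i > 0" "Y = U ** diag_mat d ** adj U"
    using pos_def_decomp by blast
  have "0 * (norm x)\<^sup>2 \<le> Re (qform (U ** diag_mat (\<lambda>i. d i powr r) ** adj U) x)"
    by (rule decomp_lower[OF U(1)]) simp
  thus ?thesis using U by (simp add: mfun_decomp)
qed

theorem loewner_heinz:
  fixes Y Z :: "complex^'n^'n"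
  assumes Y: "pos_def Y" and Z: "pos_def Z" and YZ: "loewner_le Y Z" and r: "0 < r" "r < 1"
  shows "loewner_le (mfun (\<lambda>z. z powr r) Y) (mfun (\<lambda>z. z powr r) Z)"
  unfolding loewner_le_iff
proof (intro conjI allI)
  show "hermitian (mfun (\<lambda>z. z powr r) Z - mfun (\<lambda>z. z powr r) Y)"
    by (intro hermitian_diff mfun_hermitian Y Z)
  fix x
  let ?a = "Re (qform (mfun (\<lambda>z. z powr r) Y) x)"
  let ?b = "Re (qform (mfun (\<lambda>z. z powr r) Z) x)"
  have "ennreal ?a * I1 r \<le> ennreal ?b * I1 r"
    unfolding qrep[OF Y] qrep[OF Z]
  proof (rule nn_integral_mono)
    fix l :: real
    show "ennreal (indicator {0<..} l * l powr (r - 1) * ((norm x)\<^sup>2 - l * Re (qform (mfun (\<lambda>z. 1 / (z + l)) Y) x)))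
        \<le> ennreal (indicator {0<..} l * l powr (r - 1) * ((norm x)\<^sup>2 - l * Re (qform (mfun (\<lambda>z. 1 / (z + l)) Z) x)))"
    proof (cases "l > 0")
      case False thus ?thesis by simp
    next
      case True
      have "l * Re (qform (mfun (\<lambda>z. 1 / (z + l)) Z) x) \<le> l * Re (qform (mfun (\<lambda>z. 1 / (z + l)) Y) x)"
        using resolvent_mono[OF Y Z YZ True] True by (intro mult_left_mono) auto
      hence "l powr (r - 1) * ((norm x)\<^sup>2 - l * Re (qform (mfun (\<lambda>z. 1 / (z + l)) Y) x))
          \<le> l powr (r - 1) * ((norm x)\<^sup>2 - l * Re (qform (mfun (\<lambda>z. 1 / (z + l)) Z) x))"
        by (intro mult_left_mono) auto
      thus ?thesis using True by (intro ennreal_leI) simp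
    qed
  qed
  moreover have "\<exists>c\<ge>0. I1 r = ennreal c"
    using I1_finite[OF r] unfolding less_top_ennreal[symmetric] by simp
  then obtain c where c: "I1 r = ennreal c" "c \<ge> 0" by blast
  moreover have "c > 0" using I1_pos[OF r] c(1) by simp
  ultimately have "ennreal (?a * c) \<le> ennreal (?b * c)"
    by (simp add: ennreal_mult'')
  moreover have "?b * c \<ge> 0" using mfun_pow_nonneg[OF Z] \<open>c > 0\<close> by simp
  ultimately have "?a * c \<le> ?b * c" by simp
  thus "?a \<le> ?b" using \<open>c > 0\<close> by simp
qed


definition Kset :: "real \<Rightarrow> complex^'n^'n \<Rightarrow> (complex^'n^'n) set" where
  "Kset c Q = {Y. hermitian Y \<and> (\<forall>x. c * (norm x)\<^sup>2 \<le> Re (qform Y x) \<and> Re (qform Y x) \<le> Re (qform Q x))}"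

lemma Kset_loewner:
  assumes "hermitian Q" "Y \<in> Kset c Q"
  shows "loewner_le (c *\<^sub>R mat 1) Y" "loewner_le Y Q"
  using assms by (auto simp: Kset_def loewner_le_iff Re_qform_id intro: hermitian_diff hermitian_id)

lemma Re_qform_comb: "Re (qform (u *\<^sub>R Y1 + v *\<^sub>R Y2) x) = u * Re (qform Y1 x) + v * Re (qform Y2 x)"
  by (simp add: qform_add qform_scaleR)

lemma Kset_convex: "convex (Kset c (Q::complex^'n^'n))"
proof (rule convexI)
  fix Y1 Y2 :: "complex^'n^'n" and u v :: real
  assume Y: "Y1 \<in> Kset c Q" "Y2 \<in> Kset c Q" and uv: "0 \<le> u" "0 \<le> v" "u + v = 1"
  show "u *\<^sub>R Y1 + v *\<^sub>R Y2 \<in> Kset c Q"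
    unfolding Kset_def mem_Collect_eq
  proof (intro conjI allI)
    show "hermitian (u *\<^sub>R Y1 + v *\<^sub>R Y2)"
      using Y by (auto simp: Kset_def intro: hermitian_add hermitian_scaleR)
    fix x
    have a: "c * (norm x)\<^sup>2 \<le> Re (qform Y1 x)" "Re (qform Y1 x) \<le> Re (qform Q x)"
        "c * (norm x)\<^sup>2 \<le> Re (qform Y2 x)" "Re (qform Y2 x) \<le> Re (qform Q x)"
      using Y by (auto simp: Kset_def)
    have "u * (c * (norm x)\<^sup>2) \<le> u * Re (qform Y1 x)" "v * (c * (norm x)\<^sup>2) \<le> v * Re (qform Y2 x)"
      "u * Re (qform Y1 x) \<le> u * Re (qform Q x)" "v * Re (qform Y2 x) \<le> v * Re (qform Q x)"
      using a uv by (auto intro: mult_left_mono)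
    moreover have "u * (c * (norm x)\<^sup>2) + v * (c * (norm x)\<^sup>2) = c * (norm x)\<^sup>2"
      "u * Re (qform Q x) + v * Re (qform Q x) = Re (qform Q x)"
      using uv(3) by (simp_all add: distrib_right[symmetric])
    ultimately show "c * (norm x)\<^sup>2 \<le> Re (qform (u *\<^sub>R Y1 + v *\<^sub>R Y2) x)"
      "Re (qform (u *\<^sub>R Y1 + v *\<^sub>R Y2) x) \<le> Re (qform Q x)"
      unfolding Re_qform_comb by linarith+
  qed
qed

lemma Kset_closed: "closed (Kset c (Q::complex^'n^'n))"
proof -
  have cq: "continuous_on UNIV (\<lambda>Y::complex^'n^'n. Re (qform Y x))" for x
    unfolding qform_def matrix_vector_mult_def by (intro continuous_intros)
  have ca: "continuous_on UNIV (\<lambda>Y::complex^'n^'n. adj Y)"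
    unfolding adj_def by (intro continuous_intros)
  have "Kset c Q = {Y. adj Y = Y} \<inter> {Y. \<forall>x. c * (norm x)\<^sup>2 \<le> Re (qform Y x) \<and> Re (qform Y x) \<le> Re (qform Q x)}"
    by (auto simp: Kset_def hermitian_def)
  moreover have "closed {Y::complex^'n^'n. adj Y = Y}"
    by (rule closed_Collect_eq[OF ca continuous_on_id])
  moreover have "closed {Y::complex^'n^'n. \<forall>x. c * (norm x)\<^sup>2 \<le> Re (qform Y x) \<and> Re (qform Y x) \<le> Re (qform Q x)}"
    by (intro closed_Collect_all closed_Collect_conj closed_Collect_le cq continuous_on_const)
  ultimately show ?thesis by auto
qed

lemma Kset_SP:
  fixes Q :: "complex^'n^'n"
  assumes "\<forall>x. Re (qform Q x) \<le> M * (norm x)\<^sup>2"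
  shows "Kset c Q \<subseteq> SP c M"
proof
  fix Y :: "complex^'n^'n" assume Y: "Y \<in> Kset c Q"
  hence "hermitian Y" by (simp add: Kset_def)
  then obtain U d where U: "unitary U" "Y = U ** diag_mat d ** adj U"
    using spectral by blast
  have "\<forall>x. c * (norm x)\<^sup>2 \<le> Re (qform (U ** diag_mat d ** adj U) x)" using Y U by (auto simp: Kset_def)
  hence l: "\<forall>i. c \<le> d i" using decomp_eig_lower[OF U(1)] by blast
  have "\<forall>x. Re (qform (U ** diag_mat d ** adj U) x) \<le> M * (norm x)\<^sup>2"
    using Y U assms by (auto simp: Kset_def intro: order_trans)
  hence u: "\<forall>i. d i \<le> M" using decomp_eig_upper[OF U(1)] by blast
  show "Y \<in> SP c M" unfolding SP_def mem_Collect_eq using U l u by (intro exI[of _ U] exI[of _ d]) auto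
qed

lemma SP_bounded:
  assumes "m \<ge> 0"
  shows "bounded (SP m M :: (complex^'n^'n) set)"
  unfolding bounded_iff
proof (intro exI ballI)
  fix Y :: "complex^'n^'n" assume "Y \<in> SP m M"
  then obtain U d where U: "unitary U" "\<forall>i. m \<le> d i \<and> d i \<le> M" "Y = U ** diag_mat d ** adj U"
    unfolding SP_def by blast
  have "\<forall>k. 0 \<le> d k \<and> d k \<le> M" using U(2) assms by (meson order_trans)
  hence "\<forall>k. \<bar>d k\<bar> \<le> M" by simp
  thus "norm Y \<le> real (CARD('n))^3 * M" using decomp_norm_bound[OF U(1)] U(3) by blast
qed

lemma mpow_neg_bound:
  fixes Y :: "complex^'n^'n"
  assumes "Y \<in> SP c M" "c > 0" "a \<ge> 0"
  shows "0 \<le> Re (qform (mpow Y (-a)) y)" "Re (qform (mpow Y (-a)) y) \<le> c powr (-a) * (norm y)\<^sup>2"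
proof -
  obtain U d where U: "unitary U" "\<forall>i. d i > 0" "\<forall>i. c \<le> d i \<and> d i \<le> M" "Y = U ** diag_mat d ** adj U"
    using SP_obtain[OF assms(1,2)] by blast
  have P: "mpow Y (-a) = U ** diag_mat (\<lambda>i. d i powr (-a)) ** adj U"
    using U by (simp add: mpow_mfun mfun_decomp)
  have "0 * (norm y)\<^sup>2 \<le> Re (qform (U ** diag_mat (\<lambda>i. d i powr (-a)) ** adj U) y)"
    by (rule decomp_lower[OF U(1)]) simp
  thus "0 \<le> Re (qform (mpow Y (-a)) y)" using P by simp
  have "\<forall>i. d i powr (-a) \<le> c powr (-a)" using U(3) assms(2,3) by (auto intro: powr_mono2')
  thus "Re (qform (mpow Y (-a)) y) \<le> c powr (-a) * (norm y)\<^sup>2"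
    unfolding P by (rule decomp_upper[OF U(1)])
qed

lemma conj_bound:
  fixes A P :: "complex^'n^'n"
  assumes "\<forall>y. Re (qform P y) \<le> C * (norm y)\<^sup>2" "C \<ge> 0"
  shows "Re (qform (adj A ** P ** A) x) \<le> C * (spec_norm A)\<^sup>2 * (norm x)\<^sup>2"
proof -
  have "Re (qform (adj A ** P ** A) x) \<le> C * (norm (A *v x))\<^sup>2"
    using assms(1) by (simp add: qform_conj)
  also have "(norm (A *v x))\<^sup>2 \<le> (spec_norm A * norm x)\<^sup>2"
    using spec_norm_bound[of A x] by (intro power_mono) auto
  hence "C * (norm (A *v x))\<^sup>2 \<le> C * (spec_norm A * norm x)\<^sup>2" by (rule mult_left_mono[OF _ assms(2)])
  finally show ?thesis by (simp add: power_mult_distrib mult_ac)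
qed

lemma conj_nonneg:
  fixes A P :: "complex^'n^'n"
  assumes "\<forall>y. 0 \<le> Re (qform P y)"
  shows "0 \<le> Re (qform (adj A ** P ** A) x)"
  using assms by (simp add: qform_conj)


lemma key_arith:
  fixes k k' q q' a b NA NB :: real
  assumes k: "k > 1" and k': "k' > 0" "k' \<le> k" and q: "q > 0" "q \<le> q'"
    and a: "q \<le> a" "a \<le> q'" and b: "q \<le> b" "b \<le> q'"
    and N: "NA \<ge> 0" "NB \<ge> 0"
    and hyp: "NA + NB < q powr q' * k' powr (q' + 1) / (k powr q' * (q + 1) powr (q' + 1))"
  defines "c \<equiv> q * k' / (k * (q + 1))"
  shows "c > 0" "c < 1" "c \<le> k'" "c \<le> k' - NA * c powr (-a) - NB * c powr (-b)"
proof -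
  show c0: "c > 0" using k k' q unfolding c_def by simp
  have "q * k' < k * (q + 1)"
  proof -
    have "q * k' \<le> q * k" using q k' by simp
    also have "\<dots> < k * (q + 1)" using k by (simp add: algebra_simps)
    finally show ?thesis .
  qed
  thus c1: "c < 1" using k q unfolding c_def by simp
  have "q * k' \<le> k' * (k * (q + 1))"
  proof -
    have "q \<le> k * (q + 1)" using k q by (smt (verit) mult_le_cancel_right1)
    thus ?thesis using k' by (simp add: mult.commute mult_left_mono)
  qed
  thus "c \<le> k'" using k q unfolding c_def by (simp add: divide_le_eq)
  have cp: "c powr q' > 0" using c0 by simp
  have bound_eq: "q powr q' * k' powr (q' + 1) / (k powr q' * (q + 1) powr (q' + 1)) = k' / (q + 1) * c powr q'"
  proof -
    have e3: "c powr q' = q powr q' * k' powr q' / (k powr q' * (q + 1) powr q')"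
      unfolding c_def using k k' q by (simp add: powr_divide powr_mult)
    have e1: "k' powr (q' + 1) = k' powr q' * k'" using k' by (simp add: powr_add)
    have e2: "(q + 1) powr (q' + 1) = (q + 1) powr q' * (q + 1)" using q by (simp add: powr_add)
    have kp: "k powr q' > 0" using k by simp
    have R: "(q + 1) powr q' > 0" using q by simp
    have gen: "P * (Kq * k') / (kp * (R * (q + 1))) = k' / (q + 1) * (P * Kq / (kp * R))"
      if "kp > 0" "R > 0" for P Kq kp R :: real
      using that q by (simp add: field_simps)
    show ?thesis unfolding e1 e2 e3 by (rule gen[OF kp R])
  qed
  have ca: "c powr (-a) \<le> c powr (-q')" using c0 c1 a by (intro powr_mono') auto
  have cb: "c powr (-b) \<le> c powr (-q')" using c0 c1 b by (intro powr_mono') auto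
  have "NA * c powr (-a) + NB * c powr (-b) \<le> (NA + NB) * c powr (-q')"
    using ca cb N by (simp add: distrib_right add_mono mult_left_mono)
  also have "\<dots> \<le> k' / (q + 1) * c powr q' * c powr (-q')"
    using hyp bound_eq by (intro mult_right_mono) auto
  also have "\<dots> = k' / (q + 1)" using c0 by (simp add: powr_minus)
  finally have "NA * c powr (-a) + NB * c powr (-b) \<le> k' / (q + 1)" .
  moreover have "c \<le> k' - k' / (q + 1)"
  proof -
    have "k' - k' / (q + 1) = q * k' / (q + 1)" using q by (simp add: field_simps)
    moreover have "q * k' / (k * (q + 1)) \<le> q * k' / (q + 1)"
      using k k' q by (intro divide_left_mono) auto
    ultimately show ?thesis unfolding c_def by simp
  qed
  ultimately show "c \<le> k' - NA * c powr (-a) - NB * c powr (-b)" by linarith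
qed

theorem mainTheorem5:
  fixes A B Q :: "complex^'n^'n" and s t p :: real
  assumes "s \<ge> 1" and "t \<ge> 1" and "p \<ge> 1"
    and "invertible A" and "invertible B"
    and "pos_def Q" and "lambda_max Q > 1"
    and "(spec_norm A)\<^sup>2 + (spec_norm B)\<^sup>2 <
       (let k = lambda_max Q; k' = lambda_min Q;
            q = min (t / s) (p / s); q' = max (t / s) (p / s)
        in q powr q' * k' powr (q' + 1) / (k powr q' * (q + 1) powr (q' + 1)))"
  shows "\<exists>X. pos_def X \<and>
     mpow X s + adj A ** mpow X (- t) ** A + adj B ** mpow X (- p) ** B = Q \<and>
     loewner_le
       (((min (t / s) (p / s) * lambda_min Q /
           (lambda_max Q * (min (t / s) (p / s) + 1))) powr (1 / s)) *\<^sub>R mat 1) X \<and>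
     loewner_le X (mpow Q (1 / s))"
proof -
  define k where "k = lambda_max Q"
  define k' where "k' = lambda_min Q"
  define q where "q = min (t / s) (p / s)"
  define q' where "q' = max (t / s) (p / s)"
  define c where "c = q * k' / (k * (q + 1))"
  define NA where "NA = (spec_norm A)\<^sup>2"
  define NB where "NB = (spec_norm B)\<^sup>2"
  have s0: "s > 0" using assms(1) by simp
  obtain UQ dQ where UQ: "unitary UQ" "\<forall>i. dQ i > 0" "Q = UQ ** diag_mat dQ ** adj UQ"
    using pos_def_decomp[OF assms(6)] by blast
  have kk: "k = Max (range dQ)" "k' = Min (range dQ)"
    using decomp_lambda[OF UQ(1)] UQ(3) k_def k'_def by simp_all
  have dQb: "\<forall>i. k' \<le> dQ i \<and> dQ i \<le> k" unfolding kk by simp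
  have "k' \<in> range dQ" unfolding kk by (rule Min_in) auto
  hence k'0: "k' > 0" using UQ(2) by auto
  have k1: "k > 1" using assms(7) k_def by simp
  have k'k: "k' \<le> k" using dQb by (meson order_trans)
  have hermQ: "hermitian Q" using assms(6) by (simp add: pos_def_def)
  have Qlow: "\<forall>x. k' * (norm x)\<^sup>2 \<le> Re (qform Q x)"
    using decomp_lower[OF UQ(1)] dQb UQ(3) by auto
  have Qup: "\<forall>x. Re (qform Q x) \<le> k * (norm x)\<^sup>2"
    using decomp_upper[OF UQ(1)] dQb UQ(3) by auto
  have ts: "t / s > 0" "p / s > 0" using assms(2,3) s0 by simp_all
  have q0: "q > 0" using ts by (simp add: q_def)
  have qq: "q \<le> q'" "q \<le> t / s" "t / s \<le> q'" "q \<le> p / s" "p / s \<le> q'"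
    by (simp_all add: q_def q'_def)
  have N: "NA \<ge> 0" "NB \<ge> 0" by (simp_all add: NA_def NB_def)
  have hyp: "NA + NB < q powr q' * k' powr (q' + 1) / (k powr q' * (q + 1) powr (q' + 1))"
    using assms(8) by (simp add: Let_def NA_def NB_def k_def k'_def q_def q'_def)
  note ka = key_arith[OF k1 k'0 k'k q0 qq(1) qq(2,3) qq(4,5) N hyp, folded c_def]
  have c0: "c > 0" and c1: "c < 1" and ck': "c \<le> k'"
    and key: "c \<le> k' - NA * c powr (- (t / s)) - NB * c powr (- (p / s))" using ka by auto
  define F where "F Y = Q - adj A ** mpow Y (- (t / s)) ** A - adj B ** mpow Y (- (p / s)) ** B" for Y
  define K where "K = Kset c Q"
  have KSP: "K \<subseteq> SP c k" unfolding K_def by (rule Kset_SP[OF Qup])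
  have "compact K"
    unfolding compact_eq_bounded_closed K_def
    using bounded_subset[OF SP_bounded KSP[unfolded K_def]] c0 Kset_closed by auto
  moreover have "convex K" unfolding K_def by (rule Kset_convex)
  moreover have QK: "Q \<in> K"
    unfolding K_def Kset_def mem_Collect_eq
  proof (intro conjI allI)
    show "hermitian Q" by (rule hermQ)
    fix x :: "complex^'n"
    have "c * (norm x)\<^sup>2 \<le> k' * (norm x)\<^sup>2" using ck' by (intro mult_right_mono) auto
    thus "c * (norm x)\<^sup>2 \<le> Re (qform Q x)" using Qlow by (meson order_trans)
  qed simp
  hence "K \<noteq> {}" by blast
  moreover have "continuous_on K F"
  proof -
    have pc: "continuous_on K (\<lambda>Y. mpow Y r)" for r
    proof -
      have "continuous_on (SP c k) (mfun (\<lambda>x. x powr r) :: complex^'n^'n \<Rightarrow> _)"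
        by (rule mfun_continuous_SP[OF c0]) (use c0 in \<open>intro continuous_intros, auto\<close>)
      hence "continuous_on K (mfun (\<lambda>x. x powr r) :: complex^'n^'n \<Rightarrow> _)"
        by (rule continuous_on_subset[OF _ KSP])
      thus ?thesis by (simp add: mpow_mfun[abs_def])
    qed
    show ?thesis unfolding F_def
      by (intro continuous_on_diff continuous_on_const continuous_on_mm pc)
  qed
  moreover have "F \<in> K \<rightarrow> K"
  proof
    fix Y assume YK: "Y \<in> K"
    hence YSP: "Y \<in> SP c k" using KSP by blast
    obtain U d where U: "unitary U" "\<forall>i. d i > 0" "\<forall>i. c \<le> d i \<and> d i \<le> k" "Y = U ** diag_mat d ** adj U"
      using SP_obtain[OF YSP c0] by blast
    have posY: "pos_def Y" using decomp_pos_def[OF U(1,2)] U(4) by simp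
    let ?Pa = "mpow Y (- (t / s))" and ?Pb = "mpow Y (- (p / s))"
    have Pa: "\<forall>y. 0 \<le> Re (qform ?Pa y)" "\<forall>y. Re (qform ?Pa y) \<le> c powr (- (t / s)) * (norm y)\<^sup>2"
      using mpow_neg_bound[OF YSP c0, of "t / s"] ts by auto
    have Pb: "\<forall>y. 0 \<le> Re (qform ?Pb y)" "\<forall>y. Re (qform ?Pb y) \<le> c powr (- (p / s)) * (norm y)\<^sup>2"
      using mpow_neg_bound[OF YSP c0, of "p / s"] ts by auto
    have hP: "hermitian ?Pa" "hermitian ?Pb"
      by (simp_all add: mpow_mfun mfun_hermitian[OF posY])
    have qF: "Re (qform (F Y) x) = Re (qform Q x) - Re (qform (adj A ** ?Pa ** A) x)
        - Re (qform (adj B ** ?Pb ** B) x)" for x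
      by (simp add: F_def qform_diff)
    show "F Y \<in> K" unfolding K_def Kset_def mem_Collect_eq
    proof (intro conjI allI)
      show "hermitian (F Y)" unfolding F_def
        by (intro hermitian_diff hermQ hermitian_conj hP)
      fix x :: "complex^'n"
      have a1: "0 \<le> Re (qform (adj A ** ?Pa ** A) x)" by (rule conj_nonneg[OF Pa(1)])
      have b1: "0 \<le> Re (qform (adj B ** ?Pb ** B) x)" by (rule conj_nonneg[OF Pb(1)])
      show "Re (qform (F Y) x) \<le> Re (qform Q x)" using a1 b1 qF[of x] by simp
      have a2: "Re (qform (adj A ** ?Pa ** A) x) \<le> c powr (- (t / s)) * NA * (norm x)\<^sup>2"
        unfolding NA_def by (rule conj_bound[OF Pa(2)]) simp
      have b2: "Re (qform (adj B ** ?Pb ** B) x) \<le> c powr (- (p / s)) * NB * (norm x)\<^sup>2"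
        unfolding NB_def by (rule conj_bound[OF Pb(2)]) simp
      have "c * (norm x)\<^sup>2 \<le> (k' - NA * c powr (- (t / s)) - NB * c powr (- (p / s))) * (norm x)\<^sup>2"
        using key by (intro mult_right_mono) auto
      also have "\<dots> = k' * (norm x)\<^sup>2 - c powr (- (t / s)) * NA * (norm x)\<^sup>2 - c powr (- (p / s)) * NB * (norm x)\<^sup>2"
        by (simp add: algebra_simps)
      also have "\<dots> \<le> Re (qform (F Y) x)" using qF[of x] a2 b2 Qlow by (smt (verit))
      finally show "c * (norm x)\<^sup>2 \<le> Re (qform (F Y) x)" .
    qed
  qed
  ultimately obtain Y where YK: "Y \<in> K" and FY: "F Y = Y" using brouwer by blast
  have YSP: "Y \<in> SP c k" using YK KSP by blast
  obtain U d where U: "unitary U" "\<forall>i. d i > 0" "\<forall>i. c \<le> d i \<and> d i \<le> k" "Y = U ** diag_mat d ** adj U"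
    using SP_obtain[OF YSP c0] by blast
  have posY: "pos_def Y" using decomp_pos_def[OF U(1,2)] U(4) by simp
  define X where "X = U ** diag_mat (\<lambda>i. d i powr (1 / s)) ** adj U"
  have dX: "\<forall>i. d i powr (1 / s) > 0" using U(2) by (simp add: less_imp_neq[symmetric])
  have posX: "pos_def X" unfolding X_def by (rule decomp_pos_def[OF U(1) dX])
  have Xs: "mpow X s = Y"
  proof -
    have "mpow X s = U ** diag_mat (\<lambda>i. (d i powr (1 / s)) powr s) ** adj U"
      unfolding X_def mpow_mfun by (rule mfun_decomp[OF U(1) dX])
    also have "(\<lambda>i. (d i powr (1 / s)) powr s) = d"
      using U(2) s0 by (simp add: powr_powr less_imp_le)
    finally show ?thesis using U(4) by simp
  qed
  have Xneg: "mpow X (- r) = mpow Y (- (r / s))" for r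
  proof -
    have "mpow X (- r) = U ** diag_mat (\<lambda>i. (d i powr (1 / s)) powr (- r)) ** adj U"
      unfolding X_def mpow_mfun by (rule mfun_decomp[OF U(1) dX])
    also have "(\<lambda>i. (d i powr (1 / s)) powr (- r)) = (\<lambda>i. d i powr (- (r / s)))"
      by (simp add: powr_powr)
    also have "U ** diag_mat (\<lambda>i. d i powr (- (r / s))) ** adj U = mpow Y (- (r / s))"
      unfolding U(4) mpow_mfun by (rule mfun_decomp[OF U(1,2), symmetric])
    finally show ?thesis .
  qed
  have eq: "mpow X s + adj A ** mpow X (- t) ** A + adj B ** mpow X (- p) ** B = Q"
  proof -
    have "mpow X s + adj A ** mpow X (- t) ** A + adj B ** mpow X (- p) ** B
        = F Y + adj A ** mpow Y (- (t / s)) ** A + adj B ** mpow Y (- (p / s)) ** B"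
      using Xs Xneg FY by simp
    also have "\<dots> = Q" by (simp add: F_def)
    finally show ?thesis .
  qed
  have low: "loewner_le ((c powr (1 / s)) *\<^sub>R mat 1) X"
    unfolding loewner_le_iff
  proof (intro conjI allI)
    show "hermitian (X - (c powr (1 / s)) *\<^sub>R mat 1)"
      unfolding X_def by (intro hermitian_diff hermitian_decomp hermitian_id)
    fix x :: "complex^'n"
    have "\<forall>i. c powr (1 / s) \<le> d i powr (1 / s)" using U(3) c0 s0 by (auto intro: powr_mono2)
    hence "c powr (1 / s) * (norm x)\<^sup>2 \<le> Re (qform X x)"
      unfolding X_def by (rule decomp_lower[OF U(1)])
    thus "Re (qform ((c powr (1 / s)) *\<^sub>R mat 1) x) \<le> Re (qform X x)" by (simp add: Re_qform_id)
  qed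
  have up: "loewner_le X (mpow Q (1 / s))"
  proof (cases "s = 1")
    case True
    have "X = Y" unfolding X_def U(4) True using U(2) by (simp add: less_imp_le)
    moreover have "mpow Q (1 / s) = Q"
      unfolding True UQ(3) mpow_mfun mfun_decomp[OF UQ(1,2)] using UQ(2) by (simp add: less_imp_le)
    ultimately show ?thesis using Kset_loewner(2)[OF hermQ YK[unfolded K_def]] by simp
  next
    case False
    hence r: "0 < 1 / s" "1 / s < 1" using assms(1) by auto
    have "X = mfun (\<lambda>z. z powr (1 / s)) Y" unfolding X_def U(4) by (rule mfun_decomp[OF U(1,2), symmetric])
    moreover have "loewner_le Y Q" by (rule Kset_loewner(2)[OF hermQ YK[unfolded K_def]])
    ultimately show ?thesis using loewner_heinz[OF posY assms(6) _ r] by (simp add: mpow_mfun)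
  qed
  show ?thesis
    apply (rule exI[of _ X])
    using posX eq low up by (simp add: c_def q_def k_def k'_def)
qed


end
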